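(* Let $n=qd$ for positive integers $q,d$, let $C\in\mathbb{S}^n$, and let $p>\frac{d+1}{d+3}n$. Then every second-order critical point $Y$ of (OrthoCut-BM) is globally optimal for (OrthoCut-BM), and $X=YY^\top$ is globally optimal for (OrthoCut). In particular, for $d=1$ (Max-Cut SDP) it suffices that $p>\frac{n}{2}$.
   Context: $\mathbb{S}^n$: real symmetric $n\times n$ matrices; $\langle U,V\rangle=\operatorname{tr}(U^\top V)$. For $X\in\mathbb{S}^n$ partitioned into $d\times d$ blocks $X_{ij}$, $\operatorname{sbd}(X)$ keeps the diagonal blocks $X_{ii}$ and zeros out the others. (OrthoCut): minimize $\langle C,X\rangle$ over $X\in\mathbb{S}^n$ with $\operatorname{sbd}(X)=I_n$, $X\succeq0$. (OrthoCut-BM): minimize $\langle CY,Y\rangle$ over $Y\in\mathbb{R}^{n\times p}$ with $Y^\top=[Y_1\ \cdots\ Y_q]$, $Y_k\in\mathbb{R}^{p\times d}$, subject to $Y_k^\top Y_k=I_d$ for all $k$. These are instances of the general form with constraints $\langle A_\ell,YY^\top\rangle=b_\ell$ given by the entries (on and above the diagonal) of the diagonal blocks, i.e., $\mathcal{A}(X)=$ the collection of entries of the diagonal blocks $X_{kk}$ on or above their diagonal, with $b$ the corresponding entries of $I_n$, and $\mathcal{A}^*$ its adjoint. For feasible $Y$: $T_Y=\{\dot Y:\mathcal{A}(\dot YY^\top+Y\dot Y^\top)=0\}$; $G_{ij}=\langle A_iY,A_jY\rangle$; $\mu=G^\dagger\mathcal{A}(CYY^\top)$; $S(Y)=C-\mathcal{A}^*(\mu)$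 (equivalently, $S(Y)=C-\Lambda$ where $\Lambda$ is block diagonal with symmetric diagonal blocks $\Lambda_{kk}$ chosen so that $S(Y)$ corresponds to the orthogonal projection of $CY$ onto $T_Y$). $Y$ is second-order critical if $S(Y)Y=0$ and $\langle\dot Y,S(Y)\dot Y\rangle\ge0$ for all $\dot Y\in T_Y$. *)

theory Defs
  imports "Jordan_Normal_Form.Matrix"
begin

definition frob :: "real mat \<Rightarrow> real mat \<Rightarrow> real" where
  "frob U V = (\<Sum>i<dim_row U. \<Sum>j<dim_col U. U $$ (i,j) * V $$ (i,j))"

definition sym_mat :: "real mat \<Rightarrow> bool" where
  "sym_mat X \<longleftrightarrow> X \<in> carrier_mat (dim_row X) (dim_row X) \<and> transpose_mat X = X"

definition psd :: "real mat \<Rightarrow> bool" where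
  "psd X \<longleftrightarrow> sym_mat X \<and>
     (\<forall>v \<in> carrier_vec (dim_row X). v \<bullet> (X *\<^sub>v v) \<ge> 0)"

definition same_block :: "nat \<Rightarrow> nat \<Rightarrow> nat \<Rightarrow> bool" where
  "same_block d i j \<longleftrightarrow> i div d = j div d"

definition sbd_eq_id :: "nat \<Rightarrow> real mat \<Rightarrow> bool" where
  "sbd_eq_id d X \<longleftrightarrow> (\<forall>i<dim_row X. \<forall>j<dim_row X.
      same_block d i j \<longrightarrow> X $$ (i,j) = (if i = j then 1 else 0))"

definition orthocut_feasible :: "nat \<Rightarrow> nat \<Rightarrow> real mat \<Rightarrow> bool" where
  "orthocut_feasible n d X \<longleftrightarrow> X \<in> carrier_mat n n \<and> sym_mat X \<and> sbd_eq_id d X \<and> psd X"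

text \<open>Feasible set of (OrthoCut-BM): Y_k^T Y_k = I_d for every block k, where
  Y^T = [Y_1 ... Y_q], i.e. Y_k^T consists of rows k*d .. k*d+d-1 of Y.\<close>
definition bm_feasible :: "nat \<Rightarrow> nat \<Rightarrow> nat \<Rightarrow> real mat \<Rightarrow> bool" where
  "bm_feasible q d p Y \<longleftrightarrow> Y \<in> carrier_mat (q*d) p \<and>
     (\<forall>k<q. \<forall>a<d. \<forall>b<d.
        (\<Sum>l<p. Y $$ (k*d+a, l) * Y $$ (k*d+b, l)) = (if a = b then 1 else 0))"

definition bm_obj :: "real mat \<Rightarrow> real mat \<Rightarrow> real" where
  "bm_obj C Y = frob (C * Y) Y"

text \<open>Tangent space T_Y: A(Ydot Y^T + Y Ydot^T) = 0, i.e. the entries on or above the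
  diagonal of every diagonal block vanish.\<close>
definition tangent :: "nat \<Rightarrow> real mat \<Rightarrow> real mat \<Rightarrow> bool" where
  "tangent d Y Yd \<longleftrightarrow> Yd \<in> carrier_mat (dim_row Y) (dim_col Y) \<and>
     (let M = Yd * transpose_mat Y + Y * transpose_mat Yd in
      \<forall>i<dim_row Y. \<forall>j<dim_row Y. same_block d i j \<and> i \<le> j \<longrightarrow> M $$ (i,j) = 0)"

definition block_diag_sym :: "nat \<Rightarrow> nat \<Rightarrow> real mat \<Rightarrow> bool" where
  "block_diag_sym n d L \<longleftrightarrow> L \<in> carrier_mat n n \<and> transpose_mat L = L \<and>
     (\<forall>i<n. \<forall>j<n. \<not> same_block d i j \<longrightarrow> L $$ (i,j) = 0)"

text \<open>S(Y) = C - Lambda, where Lambda is the block-diagonal matrix with symmetric blocks such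
  that (C - Lambda) Y is the orthogonal projection of CY onto T_Y.  (Lambda Y is automatically
  orthogonal to T_Y, so the projection condition amounts to (C - Lambda) Y in T_Y; for feasible
  Y this Lambda is unique.)\<close>
definition S_mat :: "nat \<Rightarrow> real mat \<Rightarrow> real mat \<Rightarrow> real mat" where
  "S_mat d C Y = C - (THE L. block_diag_sym (dim_row Y) d L \<and> tangent d Y ((C - L) * Y))"

definition second_order_critical :: "nat \<Rightarrow> nat \<Rightarrow> nat \<Rightarrow> real mat \<Rightarrow> real mat \<Rightarrow> bool" where
  "second_order_critical q d p C Y \<longleftrightarrow> bm_feasible q d p Y \<and>
     S_mat d C Y * Y = 0\<^sub>m (q*d) p \<and>
     (\<forall>Yd. tangent d Y Yd \<longrightarrow> frob Yd (S_mat d C Y * Yd) \<ge> 0)"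

end

theory Submission
  imports Defs
begin

lemma homog_exists:
  fixes A :: "'i \<Rightarrow> 'j \<Rightarrow> real"
  assumes "finite I" "finite J" "card I < card J"
  shows "\<exists>x. (\<exists>j\<in>J. x j \<noteq> 0) \<and> (\<forall>i\<in>I. (\<Sum>j\<in>J. A i j * x j) = 0)"
  using assms
proof (induction I arbitrary: J A rule: finite_induct)
  case empty
  then obtain j0 where j0: "j0 \<in> J" by (metis card.empty card_gt_0_iff ex_in_conv)
  show ?case by (rule exI[of _ "\<lambda>j. if j = j0 then 1 else 0"]) (use j0 in auto)
next
  case (insert i0 I)
  show ?case
  proof (cases "\<forall>j\<in>J. A i0 j = 0")
    case True
    from insert.IH[of J A] insert.prems insert.hyps obtain x where
      x: "\<exists>j\<in>J. x j \<noteq> 0" "\<forall>i\<in>I. (\<Sum>j\<in>J. A i j * x j) = 0" by auto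
    show ?thesis using x True by (intro exI[of _ x]) auto
  next
    case False
    then obtain j0 where j0: "j0 \<in> J" "A i0 j0 \<noteq> 0" by auto
    define J' where "J' = J - {j0}"
    define A' where "A' = (\<lambda>i j. A i j - A i j0 * A i0 j / A i0 j0)"
    have cJ: "card J' = card J - 1" unfolding J'_def using j0 insert.prems by simp
    have "card I < card J'" using insert.prems insert.hyps cJ by simp
    from insert.IH[of J' A'] this insert.prems obtain x' where
      x': "\<exists>j\<in>J'. x' j \<noteq> 0" "\<forall>i\<in>I. (\<Sum>j\<in>J'. A' i j * x' j) = 0"
      unfolding J'_def by auto
    define x where "x = (\<lambda>j. if j = j0 then - (\<Sum>j\<in>J'. A i0 j * x' j) / A i0 j0 else x' j)"
    have fJ: "finite J'" using insert.prems unfolding J'_def by simp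
    have split: "(\<Sum>j\<in>J. f j) = f j0 + (\<Sum>j\<in>J'. f j)" for f :: "'j \<Rightarrow> real"
      unfolding J'_def using j0 insert.prems by (simp add: sum.remove)
    have xJ': "\<And>j. j \<in> J' \<Longrightarrow> x j = x' j" unfolding x_def J'_def by auto
    have e0: "(\<Sum>j\<in>J. A i0 j * x j) = 0"
      unfolding split using xJ' j0 by (simp add: x_def)
    have eI: "(\<Sum>j\<in>J. A i j * x j) = 0" if i: "i \<in> I" for i
    proof -
      have "(\<Sum>j\<in>J. A i j * x j) = A i j0 * x j0 + (\<Sum>j\<in>J'. A i j * x' j)"
        unfolding split using xJ' by simp
      also have "\<dots> = (\<Sum>j\<in>J'. A' i j * x' j)"
        unfolding A'_def x_def using j0
        by (simp add: algebra_simps sum_subtractf sum_distrib_left sum_divide_distrib)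
      also have "\<dots> = 0" using x' i by auto
      finally show ?thesis .
    qed
    have nz: "\<exists>j\<in>J. x j \<noteq> 0"
    proof -
      obtain j where "j \<in> J'" "x' j \<noteq> 0" using x' by auto
      then show ?thesis using xJ' unfolding J'_def by (intro bexI[of _ j]) auto
    qed
    show ?thesis using nz e0 eI by (intro exI[of _ x]) auto
  qed
qed

lemma lin_sum:
  fixes l :: "('j \<Rightarrow> real) \<Rightarrow> real"
  assumes add: "\<And>x y. l (\<lambda>j. x j + y j) = l x + l y"
    and sc: "\<And>x c. l (\<lambda>j. c * x j) = c * l x"
    and "finite J"
  shows "l (\<lambda>k. \<Sum>j\<in>J. f j k) = (\<Sum>j\<in>J. l (f j))"
  using assms(3)
proof (induction J rule: finite_induct)
  case empty
  have "l (\<lambda>k. 0) = l (\<lambda>k. 0 * f undefined k)" by simp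
  also have "\<dots> = 0" by (subst sc) simp
  finally show ?case by simp
next
  case (insert j J)
  have "l (\<lambda>k. \<Sum>j\<in>insert j J. f j k) = l (\<lambda>k. f j k + (\<Sum>j\<in>J. f j k))"
    using insert by simp
  also have "\<dots> = l (f j) + l (\<lambda>k. \<Sum>j\<in>J. f j k)" by (subst add) simp
  finally show ?case using insert by simp
qed

lemma homog_exists_lin:
  fixes l :: "'i \<Rightarrow> ('j \<Rightarrow> real) \<Rightarrow> real"
  assumes "finite I" "finite J" "card I < card J"
    and add: "\<And>i x y. i \<in> I \<Longrightarrow> l i (\<lambda>j. x j + y j) = l i x + l i y"
    and sc: "\<And>i x c. i \<in> I \<Longrightarrow> l i (\<lambda>j. c * x j) = c * l i x"
  shows "\<exists>x. (\<exists>j\<in>J. x j \<noteq> 0) \<and> (\<forall>i\<in>I. l i x = 0)"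
proof -
  define A where "A = (\<lambda>i j. l i (\<lambda>k. if k = j then 1 else 0))"
  obtain x where x: "\<exists>j\<in>J. x j \<noteq> 0" "\<forall>i\<in>I. (\<Sum>j\<in>J. A i j * x j) = 0"
    using homog_exists[OF assms(1-3), of A] by blast
  define x' where "x' = (\<lambda>k. \<Sum>j\<in>J. x j * (if k = j then 1 else 0))"
  have x'J: "x' j = x j" if "j \<in> J" for j
    unfolding x'_def using that assms(2) by (simp add: if_distrib cong: if_cong)
  have "l i x' = 0" if i: "i \<in> I" for i
  proof -
    have "l i x' = (\<Sum>j\<in>J. l i (\<lambda>k. x j * (if k = j then 1 else 0)))"
      unfolding x'_def by (rule lin_sum[OF add[OF i] sc[OF i] assms(2)])
    also have "\<dots> = (\<Sum>j\<in>J. A i j * x j)" unfolding A_def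
      by (intro sum.cong refl, subst sc[OF i]) simp
    finally show ?thesis using x i by simp
  qed
  moreover have "\<exists>j\<in>J. x' j \<noteq> 0" using x x'J by auto
  ultimately show ?thesis by blast
qed
lemma sum4_swap:
  fixes f :: "'a \<Rightarrow> 'b \<Rightarrow> 'c \<Rightarrow> 'e \<Rightarrow> real"
  shows "(\<Sum>a\<in>A. \<Sum>b\<in>B. \<Sum>c\<in>C. \<Sum>e\<in>D. f a b c e) = (\<Sum>c\<in>C. \<Sum>e\<in>D. \<Sum>a\<in>A. \<Sum>b\<in>B. f a b c e)"
proof -
  have "(\<Sum>a\<in>A. \<Sum>b\<in>B. \<Sum>c\<in>C. \<Sum>e\<in>D. f a b c e) = (\<Sum>a\<in>A. \<Sum>c\<in>C. \<Sum>b\<in>B. \<Sum>e\<in>D. f a b c e)"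
    by (rule sum.cong[OF refl], rule sum.swap)
  also have "\<dots> = (\<Sum>c\<in>C. \<Sum>a\<in>A. \<Sum>b\<in>B. \<Sum>e\<in>D. f a b c e)" by (rule sum.swap)
  also have "\<dots> = (\<Sum>c\<in>C. \<Sum>a\<in>A. \<Sum>e\<in>D. \<Sum>b\<in>B. f a b c e)"
    by (rule sum.cong[OF refl], rule sum.cong[OF refl], rule sum.swap)
  also have "\<dots> = (\<Sum>c\<in>C. \<Sum>e\<in>D. \<Sum>a\<in>A. \<Sum>b\<in>B. f a b c e)"
    by (rule sum.cong[OF refl], rule sum.swap)
  finally show ?thesis .
qed

locale brows =
  fixes y :: "nat \<Rightarrow> nat \<Rightarrow> real" and p n d :: nat
  assumes dpos: "d > 0"
    and orth: "\<And>a b. a < n \<Longrightarrow> b < n \<Longrightarrow> a div d = b div d \<Longrightarrow>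
       (\<Sum>l<p. y a l * y b l) = (if a = b then 1 else 0)"
begin

definition old :: "nat \<Rightarrow> bool" where
  "old i \<longleftrightarrow> (\<exists>c. \<forall>l<p. y i l = (\<Sum>j<i. c j * y j l))"

definition NN :: "nat set" where "NN = {i. i < n \<and> \<not> old i}"

lemma NN_fin[simp]: "finite NN" unfolding NN_def by simp

lemma indep:
  assumes "\<And>l. l < p \<Longrightarrow> (\<Sum>\<nu>\<in>NN. w \<nu> * y \<nu> l) = 0"
  shows "\<nu> \<in> NN \<Longrightarrow> w \<nu> = 0"
proof (rule ccontr)
  assume nu: "\<nu> \<in> NN" "w \<nu> \<noteq> 0"
  define S where "S = {\<nu>\<in>NN. w \<nu> \<noteq> 0}"
  have fS: "finite S" unfolding S_def by simp
  have "S \<noteq> {}" using nu unfolding S_def by auto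
  define m where "m = Max S"
  have mS: "m \<in> S" unfolding m_def using fS \<open>S \<noteq> {}\<close> by simp
  have mmax: "\<And>x. x \<in> S \<Longrightarrow> x \<le> m" unfolding m_def using fS by simp
  have wm: "w m \<noteq> 0" and mNN: "m \<in> NN" using mS unfolding S_def by auto
  define c where "c = (\<lambda>j. if j \<in> S then - w j / w m else 0)"
  have "old m" unfolding old_def
  proof (intro exI allI impI)
    fix l assume l: "l < p"
    have "0 = (\<Sum>\<nu>\<in>NN. w \<nu> * y \<nu> l)" using assms l by simp
    also have "\<dots> = (\<Sum>\<nu>\<in>S. w \<nu> * y \<nu> l)"
      unfolding S_def by (rule sum.mono_neutral_right) auto
    also have "\<dots> = w m * y m l + (\<Sum>\<nu>\<in>S - {m}. w \<nu> * y \<nu> l)"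
      using mS fS by (simp add: sum.remove)
    finally have eq: "y m l = - (\<Sum>\<nu>\<in>S - {m}. w \<nu> * y \<nu> l) / w m"
      using wm by (simp add: field_simps)
    have "(\<Sum>j<m. c j * y j l) = (\<Sum>j\<in>S - {m}. c j * y j l)"
    proof (rule sum.mono_neutral_cong_right)
      show "S - {m} \<subseteq> {..<m}" using mmax by force
    qed (auto simp: c_def)
    also have "\<dots> = (\<Sum>j\<in>S - {m}. - (w j * y j l) / w m)"
      by (intro sum.cong refl) (auto simp: c_def)
    also have "\<dots> = y m l" unfolding eq by (simp add: sum_divide_distrib sum_negf)
    finally show "y m l = (\<Sum>j<m. c j * y j l)" by simp
  qed
  then show False using mNN unfolding NN_def by simp
qed

definition rep :: "nat \<Rightarrow> (nat \<Rightarrow> real) \<Rightarrow> bool" where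
  "rep a r \<longleftrightarrow> (\<forall>l<p. y a l = (\<Sum>\<nu>\<in>NN. r \<nu> * y \<nu> l)) \<and> (\<forall>\<nu>. a < \<nu> \<longrightarrow> r \<nu> = 0)
     \<and> (a \<in> NN \<longrightarrow> (\<forall>\<nu>. r \<nu> = (if \<nu> = a then 1 else 0)))"

lemma rep_exists: "a < n \<Longrightarrow> \<exists>r. rep a r"
proof (induction a rule: less_induct)
  case (less a)
  show ?case
  proof (cases "a \<in> NN")
    case True
    have "(\<Sum>\<nu>\<in>NN. (if \<nu> = a then 1 else 0) * y \<nu> l) = y a l" for l
    proof -
      have "(\<Sum>\<nu>\<in>NN. (if \<nu> = a then 1 else 0) * y \<nu> l) = (\<Sum>\<nu>\<in>NN. if \<nu> = a then y \<nu> l else 0)"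
        by (intro sum.cong) auto
      then show ?thesis using True by simp
    qed
    then have "rep a (\<lambda>\<nu>. if \<nu> = a then 1 else 0)" unfolding rep_def using True by simp
    then show ?thesis by blast
  next
    case False
    then have "old a" using less.prems unfolding NN_def by simp
    then obtain c where c: "\<And>l. l < p \<Longrightarrow> y a l = (\<Sum>j<a. c j * y j l)" unfolding old_def by blast
    have "\<forall>j\<in>{..<a}. \<exists>r. rep j r" using less by auto
    then obtain rr where rr: "\<And>j. j < a \<Longrightarrow> rep j (rr j)" by (metis lessThan_iff)
    define r where "r = (\<lambda>\<nu>. \<Sum>j<a. c j * rr j \<nu>)"
    have "rep a r" unfolding rep_def
    proof (intro conjI allI impI)
      fix l assume l: "l < p"
      have "y a l = (\<Sum>j<a. c j * (\<Sum>\<nu>\<in>NN. rr j \<nu> * y \<nu> l))"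
        using c[OF l] rr l unfolding rep_def by simp
      also have "\<dots> = (\<Sum>\<nu>\<in>NN. r \<nu> * y \<nu> l)" unfolding r_def
        by (simp add: sum_distrib_left sum_distrib_right mult.assoc sum.swap[of _ NN])
      finally show "y a l = (\<Sum>\<nu>\<in>NN. r \<nu> * y \<nu> l)" .
    next
      fix \<nu> assume "a < \<nu>"
      then show "r \<nu> = 0" unfolding r_def using rr unfolding rep_def by simp
    next
      fix \<nu> assume "a \<in> NN" then show "r \<nu> = (if \<nu> = a then 1 else 0)" using False by simp
    qed
    then show ?thesis by blast
  qed
qed

definition R :: "nat \<Rightarrow> nat \<Rightarrow> real" where "R a = (SOME r. rep a r)"

lemma R_rep: "a < n \<Longrightarrow> rep a (R a)"
  unfolding R_def using rep_exists by (rule someI_ex)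

lemma R_y: "a < n \<Longrightarrow> l < p \<Longrightarrow> y a l = (\<Sum>\<nu>\<in>NN. R a \<nu> * y \<nu> l)"
  using R_rep unfolding rep_def by blast

lemma R_low: "a < n \<Longrightarrow> a < \<nu> \<Longrightarrow> R a \<nu> = 0"
  using R_rep unfolding rep_def by blast

lemma R_NN: "a \<in> NN \<Longrightarrow> R a \<nu> = (if \<nu> = a then 1 else 0)"
  using R_rep unfolding rep_def NN_def by auto


lemma down_induct:
  fixes K k :: nat
  assumes base: "\<And>k. k \<ge> K \<Longrightarrow> P k"
    and step: "\<And>k. (\<And>k'. k' > k \<Longrightarrow> P k') \<Longrightarrow> P k"
  shows "P k"
proof (induction "K - k" arbitrary: k rule: less_induct)
  case less
  show ?case
  proof (cases "k \<ge> K")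
    case True then show ?thesis by (rule base)
  next
    case False
    show ?thesis
    proof (rule step)
      fix k' assume "k' > k"
      show "P k'"
      proof (cases "k' \<ge> K")
        case True then show ?thesis by (rule base)
      next
        case False then show ?thesis using less \<open>k' > k\<close> by auto
      qed
    qed
  qed
qed

lemma inj_E:
  assumes Esym: "\<And>a b. E a b = E b a"
    and Esupp: "\<And>a b. E a b \<noteq> 0 \<Longrightarrow> a < n \<and> b < n \<and> a div d = b div d"
    and Eold: "\<And>a b. a < n \<Longrightarrow> b < n \<Longrightarrow> old a \<Longrightarrow> old b \<Longrightarrow> E a b = 0"
    and EM: "\<And>l m. l < p \<Longrightarrow> m < p \<Longrightarrow> (\<Sum>a<n. \<Sum>b<n. E a b * y a l * y b m) = 0"
  shows "E a0 b0 = 0"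
proof -
  define C where "C = (\<lambda>\<nu> \<mu>. \<Sum>a<n. \<Sum>b<n. R a \<nu> * E a b * R b \<mu>)"
  have CM: "(\<Sum>\<nu>\<in>NN. \<Sum>\<mu>\<in>NN. C \<nu> \<mu> * y \<nu> l * y \<mu> m) = 0" if l: "l < p" and m: "m < p" for l m
  proof -
    have "(\<Sum>a<n. \<Sum>b<n. E a b * y a l * y b m)
        = (\<Sum>a<n. \<Sum>b<n. \<Sum>\<nu>\<in>NN. \<Sum>\<mu>\<in>NN. R a \<nu> * E a b * R b \<mu> * y \<nu> l * y \<mu> m)"
    proof (intro sum.cong refl)
      fix a b assume a: "a \<in> {..<n}" and b: "b \<in> {..<n}"
      have "E a b * y a l * y b m = E a b * ((\<Sum>\<nu>\<in>NN. R a \<nu> * y \<nu> l) * (\<Sum>\<mu>\<in>NN. R b \<mu> * y \<mu> m))"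
        using R_y a b l m by simp
      also have "\<dots> = (\<Sum>\<nu>\<in>NN. \<Sum>\<mu>\<in>NN. E a b * ((R a \<nu> * y \<nu> l) * (R b \<mu> * y \<mu> m)))"
        unfolding sum_product by (simp only: sum_distrib_left)
      also have "\<dots> = (\<Sum>\<nu>\<in>NN. \<Sum>\<mu>\<in>NN. R a \<nu> * E a b * R b \<mu> * y \<nu> l * y \<mu> m)"
        by (intro sum.cong refl) (simp add: algebra_simps)
      finally show "E a b * y a l * y b m = (\<Sum>\<nu>\<in>NN. \<Sum>\<mu>\<in>NN. R a \<nu> * E a b * R b \<mu> * y \<nu> l * y \<mu> m)" .
    qed
    also have "\<dots> = (\<Sum>\<nu>\<in>NN. \<Sum>\<mu>\<in>NN. \<Sum>a<n. \<Sum>b<n. R a \<nu> * E a b * R b \<mu> * y \<nu> l * y \<mu> m)"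
      by (rule sum4_swap)
    also have "\<dots> = (\<Sum>\<nu>\<in>NN. \<Sum>\<mu>\<in>NN. C \<nu> \<mu> * y \<nu> l * y \<mu> m)"
      unfolding C_def by (simp add: sum_distrib_right)
    finally show ?thesis using EM[OF l m] by simp
  qed
  have C0: "C \<nu> \<mu> = 0" if nu: "\<nu> \<in> NN" and mu: "\<mu> \<in> NN" for \<nu> \<mu>
  proof -
    have A: "(\<Sum>\<mu>\<in>NN. C \<nu> \<mu> * y \<mu> m) = 0" if m: "m < p" for m
    proof -
      have "(\<Sum>\<nu>\<in>NN. (\<Sum>\<mu>\<in>NN. C \<nu> \<mu> * y \<mu> m) * y \<nu> l) = 0" if l: "l < p" for l
      proof -
        have "(\<Sum>\<nu>\<in>NN. (\<Sum>\<mu>\<in>NN. C \<nu> \<mu> * y \<mu> m) * y \<nu> l)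
            = (\<Sum>\<nu>\<in>NN. \<Sum>\<mu>\<in>NN. C \<nu> \<mu> * y \<nu> l * y \<mu> m)"
          by (intro sum.cong refl) (simp add: sum_distrib_left sum_distrib_right mult_ac)
        then show ?thesis using CM[OF l m] by simp
      qed
      from indep[OF this nu] show ?thesis by simp
    qed
    from indep[of "C \<nu>", OF A mu] show ?thesis by simp
  qed
  have dd: "a div d \<le> a" for a using dpos by (simp add: div_le_dividend)
  define Z where "Z = (\<lambda>k. \<forall>a b. a div d = k \<longrightarrow> E a b = 0)"
  have "Z k" for k
  proof (rule down_induct[of n])
    fix k assume "n \<le> k"
    then show "Z k" unfolding Z_def using Esupp dd by (metis le_trans not_less)
  next
    fix k assume IH: "\<And>k'. k' > k \<Longrightarrow> Z k'"
    have later: "a div d \<le> k" if "E a b \<noteq> 0" for a b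
      using IH that unfolding Z_def by (metis not_le)
    have hzero: "E \<nu> b = 0 \<and> (\<forall>a<n. old a \<longrightarrow> R a \<nu> * E a b = 0) \<longrightarrow> True" for \<nu> b by simp
    have step1: "(\<Sum>a<n. R a \<nu> * E a b) = 0" if nu: "\<nu> \<in> NN" "\<nu> div d = k" for \<nu> b
    proof -
      define h where "h = (\<lambda>b. \<Sum>a<n. R a \<nu> * E a b)"
      have hout: "b < n \<and> b div d = k" if "h b \<noteq> 0" for b
      proof -
        obtain a where a: "a < n" "R a \<nu> * E a b \<noteq> 0" using \<open>h b \<noteq> 0\<close> unfolding h_def
          by (metis (mono_tags, lifting) lessThan_iff sum.neutral)
        then have "\<nu> \<le> a" using R_low by (metis mult_zero_left not_le)
        then have "k \<le> a div d" using nu(2) div_le_mono by metis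
        moreover have "a div d \<le> k" using later a by auto
        ultimately show ?thesis using Esupp a by auto
      qed
      have hC: "(\<Sum>b<n. h b * R b \<mu>) = 0" if mu: "\<mu> \<in> NN" for \<mu>
      proof -
        have "(\<Sum>b<n. h b * R b \<mu>) = (\<Sum>b<n. \<Sum>a<n. R a \<nu> * E a b * R b \<mu>)" unfolding h_def
          by (simp add: sum_distrib_right)
        also have "\<dots> = C \<nu> \<mu>" unfolding C_def by (rule sum.swap)
        finally have "(\<Sum>b<n. h b * R b \<mu>) = C \<nu> \<mu>" .
        then show ?thesis using C0 nu mu by simp
      qed
      have hy: "(\<Sum>b<n. h b * y b l) = 0" if l: "l < p" for l
      proof -
        have "(\<Sum>b<n. h b * y b l) = (\<Sum>b<n. \<Sum>\<mu>\<in>NN. h b * R b \<mu> * y \<mu> l)"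
          using R_y l by (simp add: sum_distrib_left mult.assoc)
        also have "\<dots> = (\<Sum>\<mu>\<in>NN. (\<Sum>b<n. h b * R b \<mu>) * y \<mu> l)"
          by (simp add: sum_distrib_right sum.swap[of _ "{..<n}" NN])
        also have "\<dots> = 0" using hC by simp
        finally show ?thesis .
      qed
      have h0: "h b' = 0" for b'
      proof (rule ccontr)
        assume hb': "h b' \<noteq> 0"
        then have b': "b' < n" "b' div d = k" using hout by auto
        have "0 = (\<Sum>l<p. (\<Sum>b<n. h b * y b l) * y b' l)" using hy by simp
        also have "\<dots> = (\<Sum>b<n. h b * (\<Sum>l<p. y b l * y b' l))"
          by (simp add: sum_distrib_left sum_distrib_right sum.swap[of _ "{..<n}" "{..<p}"] algebra_simps)
        also have "\<dots> = (\<Sum>b<n. if b = b' then h b else 0)"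
        proof (intro sum.cong refl)
          fix b assume b: "b \<in> {..<n}"
          show "h b * (\<Sum>l<p. y b l * y b' l) = (if b = b' then h b else 0)"
          proof (cases "h b = 0")
            case False
            then have "b div d = k" using hout by auto
            then show ?thesis using orth[of b b'] b b' by simp
          qed auto
        qed
        also have "\<dots> = h b'" using b' by simp
        finally show False using hb' by simp
      qed
      then show ?thesis unfolding h_def by simp
    qed
    have split: "(\<Sum>a<n. R a \<nu> * E a b) = E \<nu> b + (\<Sum>a\<in>{a. a < n \<and> old a}. R a \<nu> * E a b)"
      if nu: "\<nu> \<in> NN" for \<nu> b
    proof -
      have U: "{..<n} = NN \<union> {a. a < n \<and> old a}" unfolding NN_def by auto
      have "(\<Sum>a<n. R a \<nu> * E a b) = (\<Sum>a\<in>NN. R a \<nu> * E a b) + (\<Sum>a\<in>{a. a < n \<and> old a}. R a \<nu> * E a b)"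
        unfolding U by (rule sum.union_disjoint) (auto simp: NN_def)
      moreover have "(\<Sum>a\<in>NN. R a \<nu> * E a b) = (\<Sum>a\<in>NN. if a = \<nu> then E a b else 0)"
        by (intro sum.cong refl) (simp add: R_NN)
      ultimately show ?thesis using nu by simp
    qed
    have claim1: "E \<nu> b = 0" if nu: "\<nu> \<in> NN" "\<nu> div d = k" and b: "b < n" "old b" for \<nu> b
    proof -
      have "(\<Sum>a\<in>{a. a < n \<and> old a}. R a \<nu> * E a b) = 0"
        using Eold b by (intro sum.neutral) auto
      then show ?thesis using step1[OF nu, of b] split[OF nu(1), of b] by simp
    qed
    have claim2: "E \<nu> b = 0" if nu: "\<nu> \<in> NN" "\<nu> div d = k" for \<nu> b
    proof (cases "b < n \<and> old b")
      case True then show ?thesis using claim1 nu by blast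
    next
      case False
      show ?thesis
      proof (cases "b \<in> NN")
        case bN: True
        have "(\<Sum>a\<in>{a. a < n \<and> old a}. R a \<nu> * E a b) = 0"
        proof (intro sum.neutral ballI)
          fix a assume a: "a \<in> {a. a < n \<and> old a}"
          show "R a \<nu> * E a b = 0"
          proof (rule ccontr)
            assume ne: "R a \<nu> * E a b \<noteq> 0"
            then have "\<nu> \<le> a" using R_low a by (metis mem_Collect_eq mult_zero_left not_le)
            then have "k \<le> a div d" using nu(2) div_le_mono by metis
            moreover have "a div d \<le> k" using later ne by auto
            ultimately have "b div d = k" using Esupp ne by auto
            then have "E b a = 0" using claim1[of b a] bN a by auto
            then show False using ne Esym by simp
          qed
        qed
        then show ?thesis using step1[OF nu, of b] split[OF nu(1), of b] by simp
      next
        case False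
        then have "\<not> b < n" using \<open>\<not> (b < n \<and> old b)\<close> unfolding NN_def by auto
        then show ?thesis using Esupp by blast
      qed
    qed
    show "Z k" unfolding Z_def
    proof (intro allI impI)
      fix a b assume ak: "a div d = k"
      show "E a b = 0"
      proof (rule ccontr)
        assume ne: "E a b \<noteq> 0"
        then have ab: "a < n" "b < n" "a div d = b div d" using Esupp by auto
        show False
        proof (cases "a \<in> NN")
          case True then show False using claim2 ak ne by blast
        next
          case False
          then have oa: "old a" using ab unfolding NN_def by simp
          show False
          proof (cases "b \<in> NN")
            case True
            then have "E b a = 0" using claim2 ak ab by simp
            then show False using ne Esym by simp
          next
            case False
            then have "old b" using ab unfolding NN_def by simp
            then show False using Eold ab oa ne by simp
          qed
        qed
      qed
    qed
  qed
  then show ?thesis unfolding Z_def by blast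
qed


lemma card_block: "card {b. b < n \<and> b div d = k} \<le> d"
proof -
  have "{b. b < n \<and> b div d = k} \<subseteq> {k*d..<k*d+d}"
  proof
    fix b assume "b \<in> {b. b < n \<and> b div d = k}"
    then have "b div d = k" by simp
    have "b = k*d + b mod d" using \<open>b div d = k\<close> div_mult_mod_eq[of b d] by simp
    moreover have "b mod d < d" using dpos by simp
    ultimately show "b \<in> {k*d..<k*d+d}" by (simp only: atLeastLessThan_iff) linarith
  qed
  from card_mono[OF _ this] show ?thesis by simp
qed

definition Pairs :: "(nat \<times> nat) set" where
  "Pairs = {(a,b). a \<le> b \<and> b < n \<and> a div d = b div d}"

definition Om :: "(nat \<times> nat) set" where
  "Om = {(a,b). a \<le> b \<and> b < n \<and> a div d = b div d \<and> old a \<and> old b}"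

lemma Pairs_fin[simp]: "finite Pairs"
proof -
  have "Pairs \<subseteq> {..<n} \<times> {..<n}" unfolding Pairs_def by auto
  then show ?thesis by (rule finite_subset) simp
qed

lemma Om_sub: "Om \<subseteq> Pairs" unfolding Om_def Pairs_def by auto

lemma Om_fin[simp]: "finite Om" using finite_subset[OF Om_sub Pairs_fin] .

lemma card_Om: "2 * card Om \<le> (d+1) * card {a. a < n \<and> old a}"
proof -
  define Ol where "Ol = {a. a < n \<and> old a}"
  define Full where "Full = {(a,b). a \<in> Ol \<and> b \<in> Ol \<and> a div d = b div d}"
  define Om' where "Om' = {(a,b). b \<le> a \<and> a < n \<and> a div d = b div d \<and> old a \<and> old b}"
  define Dg where "Dg = (\<lambda>a. (a,a)) ` Ol"
  have fO: "finite Ol" unfolding Ol_def by simp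
  have fFull: "finite Full"
  proof -
    have "Full \<subseteq> Ol \<times> Ol" unfolding Full_def by auto
    then show ?thesis using fO by (metis finite_SigmaI finite_subset)
  qed
  have U: "Om \<union> Om' = Full" unfolding Om_def Om'_def Full_def Ol_def by auto
  have I: "Om \<inter> Om' = Dg" unfolding Om_def Om'_def Dg_def Ol_def by auto
  have cOm': "card Om' = card Om"
  proof -
    have "Om' = prod.swap ` Om" unfolding Om_def Om'_def by force
    moreover have "inj_on prod.swap Om" by (auto simp: inj_on_def prod.swap_def)
    ultimately show ?thesis by (simp add: card_image)
  qed
  have fOm: "finite Om" using U fFull by (metis finite_Un)
  have fOm': "finite Om'" using U fFull by (metis finite_Un)
  have "card Om + card Om' = card Full + card Dg"
    using card_Un_Int[OF fOm fOm'] U I by simp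
  moreover have "card Dg = card Ol" unfolding Dg_def by (simp add: card_image inj_on_def)
  moreover have "card Full \<le> d * card Ol"
  proof -
    have "Full = (\<Union>a\<in>Ol. (\<lambda>b. (a,b)) ` {b. b \<in> Ol \<and> a div d = b div d})"
      unfolding Full_def by auto
    then have "card Full \<le> (\<Sum>a\<in>Ol. card ((\<lambda>b. (a,b)) ` {b. b \<in> Ol \<and> a div d = b div d}))"
      using card_UN_le[OF fO] by simp
    also have "\<dots> \<le> (\<Sum>a\<in>Ol. d)"
    proof (rule sum_mono)
      fix a assume a: "a \<in> Ol"
      have "card ((\<lambda>b. (a,b)) ` {b. b \<in> Ol \<and> a div d = b div d}) \<le> card {b. b \<in> Ol \<and> a div d = b div d}"
        by (rule card_image_le) (simp add: Ol_def)
      also have "\<dots> \<le> card {b. b < n \<and> b div d = a div d}"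
        by (rule card_mono) (auto simp: Ol_def)
      also have "\<dots> \<le> d" by (rule card_block)
      finally show "card ((\<lambda>b. (a,b)) ` {b. b \<in> Ol \<and> a div d = b div d}) \<le> d" .
    qed
    finally show ?thesis by (simp add: mult.commute)
  qed
  ultimately show ?thesis unfolding Ol_def using cOm' by simp
qed

lemma card_NN_old: "card NN + card {a. a < n \<and> old a} = n"
proof -
  have "NN \<union> {a. a < n \<and> old a} = {..<n}" unfolding NN_def by auto
  moreover have "NN \<inter> {a. a < n \<and> old a} = {}" unfolding NN_def by auto
  ultimately show ?thesis using card_Un_disjoint[of NN "{a. a < n \<and> old a}"] by simp
qed



definition XX :: "nat \<Rightarrow> nat \<Rightarrow> real" where "XX i j = (\<Sum>l<p. y i l * y j l)"

lemma XX_sym: "XX i j = XX j i" unfolding XX_def by (simp add: mult.commute)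

definition Ef :: "(nat + nat \<times> nat \<Rightarrow> real) \<Rightarrow> nat \<Rightarrow> nat \<Rightarrow> real" where
  "Ef x a b = (if (a,b) \<in> Pairs then x (Inr (a,b)) else if (b,a) \<in> Pairs then x (Inr (b,a)) else 0)"

lemma Pairs_antisym: "(a,b) \<in> Pairs \<Longrightarrow> (b,a) \<in> Pairs \<Longrightarrow> a = b"
  unfolding Pairs_def by simp

lemma Pairs_D: "(a,b) \<in> Pairs \<Longrightarrow> a < n \<and> b < n \<and> a div d = b div d"
  unfolding Pairs_def by simp

lemma Ef_sym: "Ef x a b = Ef x b a"
  unfolding Ef_def using Pairs_antisym[of a b] by auto

lemma Ef_supp: "Ef x a b \<noteq> 0 \<Longrightarrow> a < n \<and> b < n \<and> a div d = b div d"
  unfolding Ef_def using Pairs_D[of a b] Pairs_D[of b a] by (auto split: if_splits)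

lemma Ef_add: "Ef (\<lambda>j. x j + x' j) a b = Ef x a b + Ef x' a b"
  unfolding Ef_def by simp

lemma Ef_scale: "Ef (\<lambda>j. c * x j) a b = c * Ef x a b"
  unfolding Ef_def by simp


definition Tm :: "(nat \<Rightarrow> nat \<Rightarrow> real) \<Rightarrow> nat \<Rightarrow> nat \<Rightarrow> real" where
  "Tm E i j = (\<Sum>a<n. \<Sum>b<n. XX i a * E a b * XX b j)"

lemma Tm_sym: assumes "\<And>a b. E a b = E b a" shows "Tm E i j = Tm E j i"
proof -
  have "Tm E j i = (\<Sum>a<n. \<Sum>b<n. XX i b * E b a * XX a j)"
    unfolding Tm_def
  proof (intro sum.cong refl)
    fix a b
    show "XX j a * E a b * XX b i = XX i b * E b a * XX a j"
      using XX_sym[of j a] XX_sym[of b i] assms[of a b] by simp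
  qed
  also have "\<dots> = Tm E i j" unfolding Tm_def by (rule sum.swap)
  finally show ?thesis by simp
qed

definition Gm :: "(nat \<Rightarrow> nat \<Rightarrow> real) \<Rightarrow> nat \<Rightarrow> nat \<Rightarrow> real" where
  "Gm E k l = (\<Sum>a<n. \<Sum>b<n. y a k * E a b * y b l)"

lemma Gm_sq: "(\<Sum>k<p. \<Sum>l<p. Gm E k l * Gm E k l) = (\<Sum>a<n. \<Sum>b<n. E a b * Tm E a b)"
proof -
  have "(\<Sum>k<p. \<Sum>l<p. Gm E k l * Gm E k l)
      = (\<Sum>k<p. \<Sum>l<p. \<Sum>a<n. \<Sum>b<n. E a b * (y a k * Gm E k l * y b l))"
  proof (intro sum.cong refl)
    fix k l
    have "Gm E k l * Gm E k l = Gm E k l * (\<Sum>a<n. \<Sum>b<n. y a k * E a b * y b l)"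
      by (simp only: Gm_def)
    also have "\<dots> = (\<Sum>a<n. \<Sum>b<n. E a b * (y a k * Gm E k l * y b l))"
      by (simp add: sum_distrib_left mult_ac)
    finally show "Gm E k l * Gm E k l = (\<Sum>a<n. \<Sum>b<n. E a b * (y a k * Gm E k l * y b l))" .
  qed
  also have "\<dots> = (\<Sum>a<n. \<Sum>b<n. \<Sum>k<p. \<Sum>l<p. E a b * (y a k * Gm E k l * y b l))"
    by (rule sum4_swap)
  also have "\<dots> = (\<Sum>a<n. \<Sum>b<n. E a b * (\<Sum>k<p. \<Sum>l<p. y a k * Gm E k l * y b l))"
    by (simp add: sum_distrib_left)
  also have "\<dots> = (\<Sum>a<n. \<Sum>b<n. E a b * Tm E a b)"
  proof (intro sum.cong refl arg_cong2[where f="(*)"])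
    fix a b
    have "(\<Sum>k<p. \<Sum>l<p. y a k * Gm E k l * y b l)
        = (\<Sum>k<p. \<Sum>l<p. \<Sum>a'<n. \<Sum>b'<n. (y a k * y a' k) * E a' b' * (y b' l * y b l))"
      unfolding Gm_def by (simp add: sum_distrib_left sum_distrib_right mult_ac)
    also have "\<dots> = (\<Sum>a'<n. \<Sum>b'<n. \<Sum>k<p. \<Sum>l<p. (y a k * y a' k) * E a' b' * (y b' l * y b l))"
      by (rule sum4_swap)
    also have "\<dots> = Tm E a b" unfolding Tm_def XX_def
      by (simp add: sum_distrib_left sum_distrib_right mult_ac)
    finally show "(\<Sum>k<p. \<Sum>l<p. y a k * Gm E k l * y b l) = Tm E a b" .
  qed
  finally show ?thesis .
qed


lemma TQ: "(\<Sum>l<p. (\<Sum>k<p. y i k * Gm E k l) * y j l) = Tm E i j"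
proof -
  have "(\<Sum>l<p. (\<Sum>k<p. y i k * Gm E k l) * y j l)
      = (\<Sum>l<p. \<Sum>k<p. \<Sum>a<n. \<Sum>b<n. (y i k * y a k) * E a b * (y b l * y j l))"
    unfolding Gm_def by (simp add: sum_distrib_left sum_distrib_right mult_ac)
  also have "\<dots> = (\<Sum>a<n. \<Sum>b<n. \<Sum>l<p. \<Sum>k<p. (y i k * y a k) * E a b * (y b l * y j l))"
    by (rule sum4_swap)
  also have "\<dots> = (\<Sum>a<n. \<Sum>b<n. XX i a * E a b * XX b j)"
  proof (intro sum.cong refl)
    fix a b
    have "XX i a * E a b * XX b j = (\<Sum>k<p. \<Sum>l<p. (y i k * y a k) * E a b * (y b l * y j l))"
      unfolding XX_def by (simp add: sum_distrib_left sum_distrib_right mult_ac)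
    also have "\<dots> = (\<Sum>l<p. \<Sum>k<p. (y i k * y a k) * E a b * (y b l * y j l))" by (rule sum.swap)
    finally show "(\<Sum>l<p. \<Sum>k<p. (y i k * y a k) * E a b * (y b l * y j l)) = XX i a * E a b * XX b j" by simp
  qed
  finally show ?thesis unfolding Tm_def .
qed

lemma key:
  assumes cnt: "(d+1)*n < (d+3)*p"
  shows "\<exists>z Q. (\<exists>l<p. z l \<noteq> 0) \<and> (\<forall>i<n. \<forall>j<n. i div d = j div d \<longrightarrow>
     v i * (\<Sum>l<p. y j l * z l) + v j * (\<Sum>l<p. y i l * z l)
     + (\<Sum>l<p. (\<Sum>k<p. y i k * Q k l) * y j l) + (\<Sum>l<p. y i l * (\<Sum>k<p. y j k * Q k l)) = 0)"
proof (cases "card NN < p")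
  case True
  have "\<exists>z. (\<exists>j\<in>{..<p}. z j \<noteq> 0) \<and> (\<forall>\<nu>\<in>NN. (\<Sum>l<p. y \<nu> l * z l) = 0)"
    by (rule homog_exists_lin) (use True in \<open>auto simp: sum.distrib algebra_simps sum_distrib_left\<close>)
  then obtain z where z: "\<exists>j\<in>{..<p}. z j \<noteq> 0" "\<And>\<nu>. \<nu> \<in> NN \<Longrightarrow> (\<Sum>l<p. y \<nu> l * z l) = 0"
    by blast
  have s0: "(\<Sum>l<p. y a l * z l) = 0" if a: "a < n" for a
  proof -
    have "(\<Sum>l<p. y a l * z l) = (\<Sum>l<p. \<Sum>\<nu>\<in>NN. R a \<nu> * y \<nu> l * z l)"
      using R_y[OF a] by (simp add: sum_distrib_right)
    also have "\<dots> = (\<Sum>\<nu>\<in>NN. R a \<nu> * (\<Sum>l<p. y \<nu> l * z l))"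
      by (simp add: sum.swap[of _ "{..<p}" NN] sum_distrib_left mult.assoc)
    also have "\<dots> = 0" using z by simp
    finally show ?thesis .
  qed
  show ?thesis
    by (rule exI[of _ z], rule exI[of _ "\<lambda>_ _. 0"]) (use z s0 in auto)
next
  case False
  define I :: "((nat \<times> nat) + (nat \<times> nat)) set" where "I = Inl ` Pairs \<union> Inr ` Om"
  define J :: "(nat + (nat \<times> nat)) set" where "J = Inl ` {..<p} \<union> Inr ` Pairs"
  define lf where "lf = (\<lambda>\<iota> (x :: nat + (nat \<times> nat) \<Rightarrow> real). case \<iota> of
      Inl ij \<Rightarrow> v (fst ij) * (\<Sum>l<p. y (snd ij) l * x (Inl l)) + v (snd ij) * (\<Sum>l<p. y (fst ij) l * x (Inl l))
         + Tm (Ef x) (fst ij) (snd ij)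
    | Inr \<omega> \<Rightarrow> x (Inr \<omega>))"
  have cI: "card I = card Pairs + card Om"
    unfolding I_def using Om_sub
    by (subst card_Un_disjoint) (auto simp: card_image finite_subset)
  have cJ: "card J = p + card Pairs"
    unfolding J_def by (subst card_Un_disjoint) (auto simp: card_image)
  have cOm: "card Om < p"
  proof -
    have A: "2 * card Om \<le> (d+1) * card {a. a < n \<and> old a}" by (rule card_Om)
    have B: "(d+1) * card {a. a < n \<and> old a} + (d+1) * card NN = (d+1) * n"
      using card_NN_old by (metis add.commute add_mult_distrib2)
    have C: "(d+1) * p \<le> (d+1) * card NN" using False by (intro mult_le_mono2) simp
    have D: "(d+3) * p = (d+1) * p + 2 * p" by (simp add: algebra_simps)
    show ?thesis using A B C D cnt by linarith
  qed
  have "\<exists>x. (\<exists>j\<in>J. x j \<noteq> 0) \<and> (\<forall>\<iota>\<in>I. lf \<iota> x = 0)"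
  proof (rule homog_exists_lin)
    show "finite I" unfolding I_def using Om_sub by (auto intro: finite_subset)
    show "finite J" unfolding J_def by auto
    show "card I < card J" using cI cJ cOm by simp
  next
    fix \<iota> x x' assume "\<iota> \<in> I"
    show "lf \<iota> (\<lambda>j. x j + x' j) = lf \<iota> x + lf \<iota> x'"
      unfolding lf_def Tm_def Ef_add
      by (auto split: sum.splits simp: sum.distrib algebra_simps)
  next
    fix \<iota> x c assume "\<iota> \<in> I"
    show "lf \<iota> (\<lambda>j. c * x j) = c * lf \<iota> x"
      unfolding lf_def Tm_def Ef_scale
      by (auto split: sum.splits simp: sum_distrib_left algebra_simps)
  qed
  then obtain x where xnz: "\<exists>j\<in>J. x j \<noteq> 0" and xeq: "\<And>\<iota>. \<iota> \<in> I \<Longrightarrow> lf \<iota> x = 0" by blast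
  define E where "E = Ef x"
  define z where "z = (\<lambda>l. x (Inl l))"
  have eqP: "v i * (\<Sum>l<p. y j l * z l) + v j * (\<Sum>l<p. y i l * z l) + Tm E i j = 0"
    if "(i,j) \<in> Pairs" for i j
    using xeq[of "Inl (i,j)"] that unfolding I_def lf_def E_def z_def by auto
  have eqO: "x (Inr \<omega>) = 0" if "\<omega> \<in> Om" for \<omega>
    using xeq[of "Inr \<omega>"] that unfolding I_def lf_def by auto
  have znz: "\<exists>l<p. z l \<noteq> 0"
  proof (rule ccontr)
    assume "\<not> (\<exists>l<p. z l \<noteq> 0)"
    then have z0: "\<And>l. l < p \<Longrightarrow> z l = 0" by auto
    have TP: "Tm E i j = 0" if "(i,j) \<in> Pairs" for i j
      using eqP[OF that] z0 by simp
    have TE: "E a b * Tm E a b = 0" for a b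
    proof (cases "E a b = 0")
      case False
      then have "(a,b) \<in> Pairs \<or> (b,a) \<in> Pairs" unfolding E_def Ef_def by (auto split: if_splits)
      then have "Tm E a b = 0"
      proof
        assume "(b,a) \<in> Pairs"
        then have "Tm E b a = 0" by (rule TP)
        then show ?thesis using Tm_sym[of E a b] Ef_sym unfolding E_def by metis
      qed (rule TP)
      then show ?thesis by simp
    qed simp
    have "(\<Sum>k<p. \<Sum>l<p. Gm E k l * Gm E k l) = 0" unfolding Gm_sq using TE by (simp del: mult_eq_0_iff)
    then have G0: "Gm E k l = 0" if "k < p" "l < p" for k l
    proof -
      assume S0: "(\<Sum>k<p. \<Sum>l<p. Gm E k l * Gm E k l) = 0"
      have nn: "\<And>k. 0 \<le> (\<Sum>l<p. Gm E k l * Gm E k l)" by (intro sum_nonneg) simp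
      have "(\<Sum>l<p. Gm E k l * Gm E k l) = 0"
        using sum_nonneg_eq_0_iff[of "{..<p}" "\<lambda>k. \<Sum>l<p. Gm E k l * Gm E k l"] S0 nn that by simp
      then have "Gm E k l * Gm E k l = 0"
        using sum_nonneg_eq_0_iff[of "{..<p}" "\<lambda>l. Gm E k l * Gm E k l"] that by simp
      then show ?thesis by simp
    qed
    have E0: "E a b = 0" for a b
    proof (rule inj_E)
      show "\<And>a b. E a b = E b a" unfolding E_def by (rule Ef_sym)
      show "\<And>a b. E a b \<noteq> 0 \<Longrightarrow> a < n \<and> b < n \<and> a div d = b div d" unfolding E_def by (rule Ef_supp)
      show "E a b = 0" if "a < n" "b < n" "old a" "old b" for a b
      proof -
        have "(a,b) \<in> Pairs \<Longrightarrow> (a,b) \<in> Om" "(b,a) \<in> Pairs \<Longrightarrow> (b,a) \<in> Om"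
          using that unfolding Pairs_def Om_def by auto
        then show ?thesis unfolding E_def Ef_def using eqO by auto
      qed
      show "(\<Sum>a<n. \<Sum>b<n. E a b * y a l * y b m) = 0" if "l < p" "m < p" for l m
        using G0[OF that] unfolding Gm_def by (simp add: mult_ac)
    qed
    have "x j = 0" if "j \<in> J" for j
    proof -
      show ?thesis
      proof (cases j)
        case (Inl l)
        then have "l < p" using that unfolding J_def by auto
        then show ?thesis using z0 Inl unfolding z_def by simp
      next
        case (Inr ab)
        obtain a b where ab: "ab = (a,b)" by (cases ab)
        then have "(a,b) \<in> Pairs" using that Inr unfolding J_def by auto
        then show ?thesis using E0[of a b] Inr ab unfolding E_def Ef_def by simp
      qed
    qed
    then show False using xnz by blast
  qed
  define Q where "Q = (\<lambda>k l. Gm E k l / 2)"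
  have TQ2: "(\<Sum>l<p. (\<Sum>k<p. y i k * Q k l) * y j l) = Tm E i j / 2" for i j
  proof -
    have "(\<Sum>l<p. (\<Sum>k<p. y i k * Q k l) * y j l) = (\<Sum>l<p. (\<Sum>k<p. y i k * Gm E k l) * y j l) / 2"
      unfolding Q_def by (simp add: sum_divide_distrib[symmetric])
    then show ?thesis using TQ by simp
  qed
  have Esym: "\<And>a b. E a b = E b a" unfolding E_def by (rule Ef_sym)
  show ?thesis
  proof (rule exI[of _ z], rule exI[of _ Q], intro conjI allI impI)
    show "\<exists>l<p. z l \<noteq> 0" by (rule znz)
  next
    fix i j assume ij: "i < n" "j < n" "i div d = j div d"
    have sw: "(\<Sum>l<p. y i l * (\<Sum>k<p. y j k * Q k l)) = (\<Sum>l<p. (\<Sum>k<p. y j k * Q k l) * y i l)"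
      by (simp add: mult.commute)
    have "v i * (\<Sum>l<p. y j l * z l) + v j * (\<Sum>l<p. y i l * z l) + Tm E i j = 0"
    proof (cases "i \<le> j")
      case True
      then show ?thesis using eqP[of i j] ij unfolding Pairs_def by simp
    next
      case False
      then have "v j * (\<Sum>l<p. y i l * z l) + v i * (\<Sum>l<p. y j l * z l) + Tm E j i = 0"
        using eqP[of j i] ij unfolding Pairs_def by simp
      then show ?thesis using Tm_sym[of E i j, OF Esym] by simp
    qed
    then show "v i * (\<Sum>l<p. y j l * z l) + v j * (\<Sum>l<p. y i l * z l)
     + (\<Sum>l<p. (\<Sum>k<p. y i k * Q k l) * y j l) + (\<Sum>l<p. y i l * (\<Sum>k<p. y j k * Q k l)) = 0"
      unfolding sw TQ2 using Tm_sym[of E j i, OF Esym] by simp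
  qed
qed

end



lemma qf_expand:
  fixes X :: "nat \<Rightarrow> nat \<Rightarrow> real"
  assumes k: "k < n"
  shows "(\<Sum>i<n. \<Sum>j<n. (v i + t * (if i = k then 1 else 0)) * X i j * (v j + t * (if j = k then 1 else 0)))
    = (\<Sum>i<n. \<Sum>j<n. v i * X i j * v j) + t * (\<Sum>j<n. X k j * v j) + t * (\<Sum>i<n. v i * X i k) + t * t * X k k"
proof -
  have "(\<Sum>i<n. \<Sum>j<n. (v i + t * (if i = k then 1 else 0)) * X i j * (v j + t * (if j = k then 1 else 0)))
    = (\<Sum>i<n. \<Sum>j<n. v i * X i j * v j + (if i = k then t * X k j * v j else 0)
        + (if j = k then t * v i * X i k else 0) + (if i = k \<and> j = k then t * t * X k k else 0))"
    by (intro sum.cong refl) (auto simp: algebra_simps)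
  also have "\<dots> = (\<Sum>i<n. \<Sum>j<n. v i * X i j * v j) + t * (\<Sum>j<n. X k j * v j) + t * (\<Sum>i<n. v i * X i k) + t * t * X k k"
  proof -
    have A: "(\<Sum>i<n. \<Sum>j<n. (if i = k then t * X k j * v j else 0)) = t * (\<Sum>j<n. X k j * v j)"
    proof -
      have "(\<Sum>i<n. \<Sum>j<n. (if i = k then t * X k j * v j else 0)) = (\<Sum>i<n. if i = k then (\<Sum>j<n. t * X k j * v j) else 0)"
        by (intro sum.cong refl) auto
      also have "\<dots> = (\<Sum>j<n. t * X k j * v j)" using k by (simp add: sum.delta sum.delta')
      finally show ?thesis by (simp add: sum_distrib_left mult_ac)
    qed
    have B: "(\<Sum>i<n. \<Sum>j<n. (if j = k then t * v i * X i k else 0)) = t * (\<Sum>i<n. v i * X i k)"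
      using k by (simp add: sum.delta' sum_distrib_left mult_ac)
    have C: "(\<Sum>i<n. \<Sum>j<n. (if i = k \<and> j = k then t * t * X k k else 0)) = t * t * X k k"
    proof -
      have "(\<Sum>i<n. \<Sum>j<n. (if i = k \<and> j = k then t * t * X k k else 0)) = (\<Sum>i<n. if i = k then t * t * X k k else 0)"
        using k by (intro sum.cong refl) (auto simp: sum.delta')
      also have "\<dots> = t * t * X k k" using k by (simp add: sum.delta sum.delta')
      finally show ?thesis .
    qed
    show ?thesis using A B C by (simp only: sum.distrib)
  qed
  finally show ?thesis .
qed


lemma sum_delta_r: fixes f :: "nat \<Rightarrow> real" shows "i < n \<Longrightarrow> (\<Sum>b<n. f b * (if b = i then 1 else 0)) = f i"
proof -
  assume i: "i < n"
  have "(\<Sum>b<n. f b * (if b = i then 1 else 0)) = (\<Sum>b<n. if b = i then f b else 0)"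
    by (rule sum.cong) auto
  also have "\<dots> = f i" using i by simp
  finally show ?thesis .
qed

lemma sum_delta_l: fixes f :: "nat \<Rightarrow> real" shows "i < n \<Longrightarrow> (\<Sum>b<n. (if b = i then 1 else 0) * f b) = f i"
  using sum_delta_r[of i n f] by (simp add: mult.commute)

lemma qf_delta:
  fixes X :: "nat \<Rightarrow> nat \<Rightarrow> real"
  assumes "i < n" "k < n"
  shows "(\<Sum>a<n. \<Sum>b<n. ((if a = i then 1 else 0) + t * (if a = k then 1 else 0)) * X a b
            * ((if b = i then 1 else 0) + t * (if b = k then 1 else 0)))
    = X i i + t * X k i + t * X i k + t * t * X k k"
proof -
  have e: "(\<Sum>a<n. \<Sum>b<n. (if a = i then 1 else 0) * X a b * (if b = i then 1 else 0)) = X i i"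
  proof -
    have "(\<Sum>a<n. \<Sum>b<n. (if a = i then 1 else 0) * X a b * (if b = i then 1 else 0))
        = (\<Sum>a<n. if a = i then X a i else 0)"
      using assms(1) by (intro sum.cong refl) (simp add: sum_delta_r)
    also have "\<dots> = X i i" using assms(1) by (simp add: sum.delta sum.delta')
    finally show ?thesis .
  qed
  have f: "(\<Sum>j<n. X k j * (if j = i then 1 else 0)) = X k i" using assms(1) by (rule sum_delta_r)
  have g: "(\<Sum>j<n. (if j = i then 1 else 0) * X j k) = X i k" using assms(1) by (rule sum_delta_l)
  show ?thesis
    using qf_expand[OF assms(2), where v="\<lambda>a. if a = i then 1 else 0" and X=X and t=t]
    unfolding e f g .
qed

lemma fejer:
  fixes S X :: "nat \<Rightarrow> nat \<Rightarrow> real"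
  assumes Xsym: "\<And>i j. i < n \<Longrightarrow> j < n \<Longrightarrow> X i j = X j i"
    and Spsd: "\<And>v. 0 \<le> (\<Sum>i<n. \<Sum>j<n. v i * S i j * v j)"
    and Xpsd: "\<And>v. 0 \<le> (\<Sum>i<n. \<Sum>j<n. v i * X i j * v j)"
  shows "0 \<le> (\<Sum>i<n. \<Sum>j<n. S i j * X i j)"
proof -
  have main: "\<And>X. (\<forall>i j. i < n \<longrightarrow> j < n \<longrightarrow> X i j = X j i) \<longrightarrow>
      (\<forall>v. 0 \<le> (\<Sum>i<n. \<Sum>j<n. v i * X i j * v j)) \<longrightarrow>
      (\<forall>i j. i < n \<longrightarrow> j < n \<longrightarrow> (k \<le> i \<or> k \<le> j) \<longrightarrow> X i j = 0) \<longrightarrow>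
      0 \<le> (\<Sum>i<n. \<Sum>j<n. S i j * X i j)" for k
  proof (induction k)
    case 0
    show ?case by (intro allI impI) simp
  next
    case (Suc k)
    show ?case
    proof (intro allI impI)
      fix X :: "nat \<Rightarrow> nat \<Rightarrow> real"
      assume sym: "\<forall>i j. i < n \<longrightarrow> j < n \<longrightarrow> X i j = X j i"
        and psd: "\<forall>v. 0 \<le> (\<Sum>i<n. \<Sum>j<n. v i * X i j * v j)"
        and supp: "\<forall>i j. i < n \<longrightarrow> j < n \<longrightarrow> (Suc k \<le> i \<or> Suc k \<le> j) \<longrightarrow> X i j = 0"
      show "0 \<le> (\<Sum>i<n. \<Sum>j<n. S i j * X i j)"
      proof (cases "k < n")
        case False
        then have "\<forall>i j. i < n \<longrightarrow> j < n \<longrightarrow> (k \<le> i \<or> k \<le> j) \<longrightarrow> X i j = 0" by auto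
        then show ?thesis using Suc.IH sym psd by blast
      next
        case kn: True
        have q2: "0 \<le> X i i + t * X k i + t * X i k + t * t * X k k" if "i < n" for i t
        proof -
          have "0 \<le> (\<Sum>a<n. \<Sum>b<n. ((if a = i then 1 else 0) + t * (if a = k then 1 else 0)) * X a b
            * ((if b = i then 1 else 0) + t * (if b = k then 1 else 0)))"
            using spec[OF psd, of "\<lambda>a. (if a = i then 1 else 0) + t * (if a = k then 1 else 0)"] by simp
          then show ?thesis unfolding qf_delta[OF that kn] .
        qed
        have akk: "0 \<le> X k k" using q2[OF kn, of 0] by simp
        show ?thesis
        proof (cases "X k k = 0")
          case True
          have col0: "X i k = 0" if i: "i < n" for i
          proof (rule ccontr)
            assume ne: "X i k \<noteq> 0"
            define t where "t = - (X i i + 1) / (2 * X i k)"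
            have "0 \<le> X i i + t * X k i + t * X i k + t * t * X k k" by (rule q2[OF i])
            also have "\<dots> = X i i + 2 * t * X i k" using True sym i kn by simp
            also have "\<dots> = -1" unfolding t_def using ne by (simp add: field_simps)
            finally show False by simp
          qed
          have "\<forall>i j. i < n \<longrightarrow> j < n \<longrightarrow> (k \<le> i \<or> k \<le> j) \<longrightarrow> X i j = 0"
          proof (intro allI impI)
            fix i j assume ij: "i < n" "j < n" "k \<le> i \<or> k \<le> j"
            show "X i j = 0"
            proof (cases "i = k \<or> j = k")
              case True
              then show ?thesis using col0 ij sym by auto
            next
              case False
              then show ?thesis using supp ij by auto
            qed
          qed
          then show ?thesis using Suc.IH sym psd by blast
        next
          case False
          define a where "a = X k k"
          have apos: "0 < a" using akk False unfolding a_def by simp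
          define X' where "X' = (\<lambda>i j. X i j - X i k * X k j / a)"
          have sym': "\<forall>i j. i < n \<longrightarrow> j < n \<longrightarrow> X' i j = X' j i"
            unfolding X'_def using sym kn by (auto simp: mult.commute)
          have supp': "\<forall>i j. i < n \<longrightarrow> j < n \<longrightarrow> (k \<le> i \<or> k \<le> j) \<longrightarrow> X' i j = 0"
          proof (intro allI impI)
            fix i j assume ij: "i < n" "j < n" "k \<le> i \<or> k \<le> j"
            consider "i = k" | "j = k" | "Suc k \<le> i \<or> Suc k \<le> j" using ij by linarith
            then show "X' i j = 0"
            proof cases
              case 1 then show ?thesis unfolding X'_def a_def using apos a_def by simp
            next
              case 2 then show ?thesis unfolding X'_def a_def using apos a_def sym ij kn by simp
            next
              case 3
              then have "X i j = 0" using supp ij by auto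
              moreover have "X i k * X k j = 0"
              proof (cases "Suc k \<le> i")
                case True then show ?thesis using supp ij kn by simp
              next
                case False then have "Suc k \<le> j" using 3 by simp
                then show ?thesis using supp ij kn by simp
              qed
              ultimately show ?thesis unfolding X'_def by simp
            qed
          qed
          have psd': "\<forall>v. 0 \<le> (\<Sum>i<n. \<Sum>j<n. v i * X' i j * v j)"
          proof
            fix v :: "nat \<Rightarrow> real"
            define w where "w = (\<Sum>i<n. v i * X i k)"
            have w2: "(\<Sum>j<n. X k j * v j) = w" unfolding w_def using sym kn
              by (intro sum.cong refl) (simp add: mult.commute)
            define t where "t = - w / a"
            have "0 \<le> (\<Sum>i<n. \<Sum>j<n. (v i + t * (if i = k then 1 else 0)) * X i j * (v j + t * (if j = k then 1 else 0)))"
              using spec[OF psd, of "\<lambda>a. v a + t * (if a = k then 1 else 0)"] by simp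
            also have "\<dots> = (\<Sum>i<n. \<Sum>j<n. v i * X i j * v j) + t * w + t * w + t * t * a"
              unfolding qf_expand[OF kn] w2 w_def a_def by simp
            also have "\<dots> = (\<Sum>i<n. \<Sum>j<n. v i * X i j * v j) - w * w / a"
              unfolding t_def using apos by (simp add: field_simps)
            also have "\<dots> = (\<Sum>i<n. \<Sum>j<n. v i * X' i j * v j)"
            proof -
              have "(\<Sum>i<n. \<Sum>j<n. v i * X' i j * v j) = (\<Sum>i<n. \<Sum>j<n. v i * X i j * v j - (v i * X i k) * (X k j * v j) / a)"
                unfolding X'_def by (intro sum.cong refl) (simp add: algebra_simps)
              also have "\<dots> = (\<Sum>i<n. \<Sum>j<n. v i * X i j * v j) - (\<Sum>i<n. \<Sum>j<n. (v i * X i k) * (X k j * v j)) / a"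
                by (simp add: sum_subtractf sum_divide_distrib)
              also have "(\<Sum>i<n. \<Sum>j<n. (v i * X i k) * (X k j * v j)) = w * w"
              proof -
                have "(\<Sum>i<n. \<Sum>j<n. (v i * X i k) * (X k j * v j)) = (\<Sum>i<n. v i * X i k) * (\<Sum>j<n. X k j * v j)"
                  by (simp add: sum_product)
                then show ?thesis using w2 unfolding w_def by simp
              qed
              finally show ?thesis by simp
            qed
            finally show "0 \<le> (\<Sum>i<n. \<Sum>j<n. v i * X' i j * v j)" .
          qed
          have IHX': "0 \<le> (\<Sum>i<n. \<Sum>j<n. S i j * X' i j)" using Suc.IH sym' psd' supp' by blast
          have Sx: "0 \<le> (\<Sum>i<n. \<Sum>j<n. X i k * S i j * X j k)" using Spsd[of "\<lambda>i. X i k"] by simp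
          have "(\<Sum>i<n. \<Sum>j<n. S i j * X i j) = (\<Sum>i<n. \<Sum>j<n. S i j * X' i j + (X i k * S i j * X j k) / a)"
          proof (intro sum.cong refl)
            fix i j assume "i \<in> {..<n}" "j \<in> {..<n}"
            then have "X k j = X j k" using sym kn by auto
            then show "S i j * X i j = S i j * X' i j + (X i k * S i j * X j k) / a"
              unfolding X'_def using apos by (simp add: field_simps)
          qed
          also have "\<dots> = (\<Sum>i<n. \<Sum>j<n. S i j * X' i j) + (\<Sum>i<n. \<Sum>j<n. X i k * S i j * X j k) / a"
            by (simp add: sum.distrib sum_divide_distrib)
          finally show ?thesis using IHX' Sx apos by simp
        qed
      qed
    qed
  qed
  show ?thesis using main[of X n] Xsym Xpsd by auto
qed



lemma mult_entry:
  assumes "A \<in> carrier_mat a b" "B \<in> carrier_mat b c" "i < a" "j < c"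
  shows "(A * B) $$ (i,j) = (\<Sum>k<b. A $$ (i,k) * B $$ (k,j))"
  using assms by (simp add: scalar_prod_def atLeast0LessThan)

lemma tr_entry:
  assumes "A \<in> carrier_mat a b" "i < b" "j < a"
  shows "transpose_mat A $$ (i,j) = A $$ (j,i)"
  using assms by simp

lemma bm_orth:
  assumes "bm_feasible q d p Y" "d > 0" "a < q*d" "b < q*d" "a div d = b div d"
  shows "(\<Sum>l<p. Y $$ (a,l) * Y $$ (b,l)) = (if a = b then 1 else 0)"
proof -
  define k where "k = a div d"
  have k: "k < q" using assms(3) assms(2) unfolding k_def
    by (simp add: less_mult_imp_div_less)
  have a: "a = k*d + a mod d" unfolding k_def by simp
  have b: "b = k*d + b mod d" using assms(5) unfolding k_def by (metis div_mult_mod_eq)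
  have "a mod d < d" "b mod d < d" using assms(2) by auto
  then have "(\<Sum>l<p. Y $$ (k*d + a mod d, l) * Y $$ (k*d + b mod d, l)) = (if a mod d = b mod d then 1 else 0)"
    using assms(1) k unfolding bm_feasible_def by blast
  moreover have "(a mod d = b mod d) = (a = b)" using a b by metis
  ultimately show ?thesis using a b by metis
qed


definition CX :: "nat \<Rightarrow> nat \<Rightarrow> real mat \<Rightarrow> real mat \<Rightarrow> nat \<Rightarrow> nat \<Rightarrow> real" where
  "CX n p C Y i j = (\<Sum>k<n. C $$ (i,k) * (\<Sum>l<p. Y $$ (k,l) * Y $$ (j,l)))"

definition Lam :: "nat \<Rightarrow> nat \<Rightarrow> nat \<Rightarrow> real mat \<Rightarrow> real mat \<Rightarrow> real mat" where
  "Lam n p d C Y = mat n n (\<lambda>(i,j). if i div d = j div d then (CX n p C Y i j + CX n p C Y j i) / 2 else 0)"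

lemma sym_entry: assumes "L \<in> carrier_mat n n" "transpose_mat L = L" "i < n" "j < n"
  shows "L $$ (i,j) = L $$ (j,i)"
  using assms by (metis index_transpose_mat(1) carrier_matD)

lemma tangent_expr:
  assumes feas: "bm_feasible q d p Y" and d: "d > 0"
    and C: "C \<in> carrier_mat (q*d) (q*d)" and L: "L \<in> carrier_mat (q*d) (q*d)"
    and Loff: "\<And>i j. i < q*d \<Longrightarrow> j < q*d \<Longrightarrow> i div d \<noteq> j div d \<Longrightarrow> L $$ (i,j) = 0"
    and ij: "i < q*d" "j < q*d" "i div d = j div d"
  shows "(((C - L) * Y) * transpose_mat Y + Y * transpose_mat ((C - L) * Y)) $$ (i,j)
     = CX (q*d) p C Y i j + CX (q*d) p C Y j i - L $$ (i,j) - L $$ (j,i)"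
proof -
  define n where "n = q*d"
  have Y: "Y \<in> carrier_mat n p" using feas unfolding bm_feasible_def n_def by simp
  define A where "A = (C - L) * Y"
  have A: "A \<in> carrier_mat n p" unfolding A_def using L Y n_def by (metis minus_carrier_mat mult_carrier_mat)
  have Aent: "A $$ (a,l) = (\<Sum>k<n. (C $$ (a,k) - L $$ (a,k)) * Y $$ (k,l))" if "a < n" "l < p" for a l
  proof -
    have CL: "C - L \<in> carrier_mat n n" using L n_def by (metis minus_carrier_mat)
    have "A $$ (a,l) = (\<Sum>k<n. (C - L) $$ (a,k) * Y $$ (k,l))"
      unfolding A_def by (rule mult_entry[OF CL Y that])
    also have "\<dots> = (\<Sum>k<n. (C $$ (a,k) - L $$ (a,k)) * Y $$ (k,l))"
      using C L that n_def by (intro sum.cong refl) simp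
    finally show ?thesis .
  qed
  have half: "(\<Sum>l<p. A $$ (a,l) * Y $$ (b,l)) = CX n p C Y a b - L $$ (a,b)"
    if ab: "a < n" "b < n" "a div d = b div d" for a b
  proof -
    have "(\<Sum>l<p. A $$ (a,l) * Y $$ (b,l)) = (\<Sum>l<p. \<Sum>k<n. (C $$ (a,k) - L $$ (a,k)) * Y $$ (k,l) * Y $$ (b,l))"
      using Aent ab by (simp add: sum_distrib_right)
    also have "\<dots> = (\<Sum>k<n. (C $$ (a,k) - L $$ (a,k)) * (\<Sum>l<p. Y $$ (k,l) * Y $$ (b,l)))"
      by (subst sum.swap) (simp add: sum_distrib_left mult.assoc)
    also have "\<dots> = CX n p C Y a b - (\<Sum>k<n. L $$ (a,k) * (\<Sum>l<p. Y $$ (k,l) * Y $$ (b,l)))"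
      unfolding CX_def by (simp add: algebra_simps sum_subtractf)
    also have "(\<Sum>k<n. L $$ (a,k) * (\<Sum>l<p. Y $$ (k,l) * Y $$ (b,l))) = (\<Sum>k<n. if k = b then L $$ (a,k) else 0)"
    proof (intro sum.cong refl)
      fix k assume k: "k \<in> {..<n}"
      show "L $$ (a,k) * (\<Sum>l<p. Y $$ (k,l) * Y $$ (b,l)) = (if k = b then L $$ (a,k) else 0)"
      proof (cases "a div d = k div d")
        case True
        then show ?thesis using bm_orth[OF feas d, of k b] k ab n_def by auto
      next
        case False
        then show ?thesis using Loff[of a k] k ab n_def by auto
      qed
    qed
    also have "\<dots> = L $$ (a,b)" using ab by simp
    finally show ?thesis .
  qed
  have e1: "(A * transpose_mat Y) $$ (i,j) = (\<Sum>l<p. A $$ (i,l) * Y $$ (j,l))"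
    using mult_entry[of A n p "transpose_mat Y" n i j] A Y ij n_def by simp
  have e2: "(Y * transpose_mat A) $$ (i,j) = (\<Sum>l<p. A $$ (j,l) * Y $$ (i,l))"
    using mult_entry[of Y n p "transpose_mat A" n i j] A Y ij n_def by (simp add: mult.commute)
  have "((A * transpose_mat Y) + (Y * transpose_mat A)) $$ (i,j) = (A * transpose_mat Y) $$ (i,j) + (Y * transpose_mat A) $$ (i,j)"
    using A Y ij n_def by simp
  then show ?thesis unfolding A_def[symmetric] n_def[symmetric] e1 e2
    using half[of i j] half[of j i] ij n_def by simp
qed


lemma Lam_carrier: "Lam n p d C Y \<in> carrier_mat n n" unfolding Lam_def by simp

lemma Lam_bds:
  assumes feas: "bm_feasible q d p Y" and d: "d > 0" and C: "C \<in> carrier_mat (q*d) (q*d)"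
  shows "block_diag_sym (q*d) d (Lam (q*d) p d C Y) \<and> tangent d Y ((C - Lam (q*d) p d C Y) * Y)"
proof -
  define n where "n = q*d"
  define L where "L = Lam n p d C Y"
  have Y: "Y \<in> carrier_mat n p" using feas unfolding bm_feasible_def n_def by simp
  have L: "L \<in> carrier_mat n n" unfolding L_def by (rule Lam_carrier)
  have Lent: "L $$ (i,j) = (if i div d = j div d then (CX n p C Y i j + CX n p C Y j i) / 2 else 0)"
    if "i < n" "j < n" for i j unfolding L_def Lam_def using that by simp
  have "block_diag_sym n d L" unfolding block_diag_sym_def
  proof (intro conjI allI impI)
    show "L \<in> carrier_mat n n" by (rule L)
    show "transpose_mat L = L"
      by (rule eq_matI) (use L Lent in \<open>auto simp: add.commute\<close>)
    fix i j assume "i < n" "j < n" "\<not> same_block d i j"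
    then show "L $$ (i,j) = 0" using Lent unfolding same_block_def by simp
  qed
  moreover have "tangent d Y ((C - L) * Y)" unfolding tangent_def Let_def
  proof (intro conjI allI impI)
    show "(C - L) * Y \<in> carrier_mat (dim_row Y) (dim_col Y)"
      using L Y by (metis minus_carrier_mat mult_carrier_mat carrier_matD)
    fix i j assume ij: "i < dim_row Y" "j < dim_row Y" "same_block d i j \<and> i \<le> j"
    have ij': "i < q*d" "j < q*d" "i div d = j div d" using ij Y n_def unfolding same_block_def by auto
    have Loff: "\<And>i j. i < q*d \<Longrightarrow> j < q*d \<Longrightarrow> i div d \<noteq> j div d \<Longrightarrow> L $$ (i,j) = 0"
      using Lent n_def by simp
    have te: "((C - L) * Y * transpose_mat Y + Y * transpose_mat ((C - L) * Y)) $$ (i, j)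
       = CX (q*d) p C Y i j + CX (q*d) p C Y j i - L $$ (i,j) - L $$ (j,i)"
      by (rule tangent_expr[OF feas d C L[unfolded n_def] Loff ij'])
    have "L $$ (i,j) = (CX (q*d) p C Y i j + CX (q*d) p C Y j i) / 2"
         "L $$ (j,i) = (CX (q*d) p C Y j i + CX (q*d) p C Y i j) / 2"
      using Lent ij' n_def by auto
    then show "((C - L) * Y * transpose_mat Y + Y * transpose_mat ((C - L) * Y)) $$ (i, j) = 0"
      unfolding te by simp
  qed
  ultimately show ?thesis unfolding L_def n_def by simp
qed

lemma Lam_unique:
  assumes feas: "bm_feasible q d p Y" and d: "d > 0" and C: "C \<in> carrier_mat (q*d) (q*d)"
    and P: "block_diag_sym (q*d) d L \<and> tangent d Y ((C - L) * Y)"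
  shows "L = Lam (q*d) p d C Y"
proof -
  define n where "n = q*d"
  have Y: "Y \<in> carrier_mat n p" using feas unfolding bm_feasible_def n_def by simp
  have L: "L \<in> carrier_mat n n" and Lt: "transpose_mat L = L"
    and Loff: "\<And>i j. i < q*d \<Longrightarrow> j < q*d \<Longrightarrow> i div d \<noteq> j div d \<Longrightarrow> L $$ (i,j) = 0"
    using P unfolding block_diag_sym_def same_block_def n_def by auto
  have Lsym: "L $$ (i,j) = L $$ (j,i)" if "i < n" "j < n" for i j
    by (rule sym_entry[OF L Lt that])
  have tan: "CX n p C Y i j + CX n p C Y j i - L $$ (i,j) - L $$ (j,i) = 0"
    if ij: "i < n" "j < n" "i div d = j div d" "i \<le> j" for i j
  proof -
    have "((C - L) * Y * transpose_mat Y + Y * transpose_mat ((C - L) * Y)) $$ (i, j) = 0"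
      using P ij Y unfolding tangent_def Let_def same_block_def by auto
    then show ?thesis using tangent_expr[OF feas d C L[unfolded n_def] Loff] ij n_def by simp
  qed
  show ?thesis
  proof (rule eq_matI)
    show "dim_row L = dim_row (Lam (q*d) p d C Y)" "dim_col L = dim_col (Lam (q*d) p d C Y)"
      using L Lam_carrier n_def by (auto simp: Lam_def)
    fix i j assume "i < dim_row (Lam (q*d) p d C Y)" "j < dim_col (Lam (q*d) p d C Y)"
    then have ij: "i < n" "j < n" unfolding Lam_def n_def by auto
    show "L $$ (i,j) = Lam (q*d) p d C Y $$ (i,j)"
    proof (cases "i div d = j div d")
      case False
      then show ?thesis using Loff ij n_def unfolding Lam_def by simp
    next
      case True
      have "L $$ (i,j) = (CX n p C Y i j + CX n p C Y j i) / 2"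
      proof (cases "i \<le> j")
        case True
        then show ?thesis using tan[of i j] ij \<open>i div d = j div d\<close> Lsym[OF ij] by simp
      next
        case False
        then show ?thesis using tan[of j i] ij \<open>i div d = j div d\<close> Lsym[OF ij] by simp
      qed
      then show ?thesis using True ij n_def unfolding Lam_def by simp
    qed
  qed
qed

lemma S_mat_eq:
  assumes feas: "bm_feasible q d p Y" and d: "d > 0" and C: "C \<in> carrier_mat (q*d) (q*d)"
  shows "S_mat d C Y = C - Lam (q*d) p d C Y"
proof -
  have dr: "dim_row Y = q*d" using feas unfolding bm_feasible_def by (metis carrier_matD(1))
  have "(THE L. block_diag_sym (dim_row Y) d L \<and> tangent d Y ((C - L) * Y)) = Lam (q*d) p d C Y"
    unfolding dr
  proof (rule the_equality)
    show "block_diag_sym (q*d) d (Lam (q*d) p d C Y) \<and> tangent d Y ((C - Lam (q*d) p d C Y) * Y)"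
      by (rule Lam_bds[OF feas d C])
    fix L assume "block_diag_sym (q*d) d L \<and> tangent d Y ((C - L) * Y)"
    then show "L = Lam (q*d) p d C Y" by (rule Lam_unique[OF feas d C])
  qed
  then show ?thesis unfolding S_mat_def by simp
qed


lemma frob_entries: assumes "A \<in> carrier_mat n m"
  shows "frob A B = (\<Sum>i<n. \<Sum>j<m. A $$ (i,j) * B $$ (i,j))"
  using assms unfolding frob_def by simp

lemma quad_vec: assumes X: "X \<in> carrier_mat n n"
  shows "vec n v \<bullet> (X *\<^sub>v vec n v) = (\<Sum>i<n. \<Sum>j<n. v i * X $$ (i,j) * v j)"
proof -
  have "vec n v \<bullet> (X *\<^sub>v vec n v) = (\<Sum>i<n. v i * (\<Sum>j<n. X $$ (i,j) * v j))"
    using X by (simp add: scalar_prod_def atLeast0LessThan)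
  also have "\<dots> = (\<Sum>i<n. \<Sum>j<n. v i * X $$ (i,j) * v j)"
    by (simp add: sum_distrib_left mult.assoc)
  finally show ?thesis .
qed

lemma psd_fn: assumes "psd X" "X \<in> carrier_mat n n"
  shows "0 \<le> (\<Sum>i<n. \<Sum>j<n. v i * X $$ (i,j) * v j)"
proof -
  have "vec n v \<in> carrier_vec n" by simp
  then have "0 \<le> vec n v \<bullet> (X *\<^sub>v vec n v)" using assms unfolding psd_def by auto
  then show ?thesis using quad_vec[OF assms(2)] by simp
qed

lemma gram_entry: assumes "Z \<in> carrier_mat n p" "i < n" "j < n"
  shows "(Z * transpose_mat Z) $$ (i,j) = (\<Sum>l<p. Z $$ (i,l) * Z $$ (j,l))"
  using mult_entry[of Z n p "transpose_mat Z" n i j] assms by simp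

lemma gram_feasible:
  assumes feas: "bm_feasible q d p Z" and d: "d > 0"
  shows "orthocut_feasible (q*d) d (Z * transpose_mat Z)"
proof -
  define n where "n = q*d"
  have Z: "Z \<in> carrier_mat n p" using feas unfolding bm_feasible_def n_def by simp
  define G where "G = Z * transpose_mat Z"
  have G: "G \<in> carrier_mat n n" unfolding G_def using Z by simp
  have Gt: "transpose_mat G = G" unfolding G_def
    using transpose_mult[OF Z, of "transpose_mat Z" n] Z by simp
  have sm: "sym_mat G" unfolding sym_mat_def using G Gt by simp
  have "sbd_eq_id d G" unfolding sbd_eq_id_def
  proof (intro allI impI)
    fix i j assume ij: "i < dim_row G" "j < dim_row G" "same_block d i j"
    then have ij': "i < n" "j < n" "i div d = j div d" using G unfolding same_block_def by auto
    show "G $$ (i,j) = (if i = j then 1 else 0)"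
      unfolding G_def gram_entry[OF Z ij'(1,2)] using bm_orth[OF feas d] ij' n_def by simp
  qed
  moreover have "psd G" unfolding psd_def
  proof (intro conjI ballI)
    show "sym_mat G" by (rule sm)
    fix v :: "real vec" assume v: "v \<in> carrier_vec (dim_row G)"
    then have vn: "v \<in> carrier_vec n" using G by simp
    have vv: "v = vec n (\<lambda>i. v $ i)" using vn by auto
    have "v \<bullet> (G *\<^sub>v v) = (\<Sum>i<n. \<Sum>j<n. v $ i * G $$ (i,j) * v $ j)"
      by (subst (1 2) vv, rule quad_vec[OF G])
    also have "\<dots> = (\<Sum>i<n. \<Sum>j<n. \<Sum>l<p. (v $ i * Z $$ (i,l)) * (v $ j * Z $$ (j,l)))"
    proof (intro sum.cong refl)
      fix i j assume "i \<in> {..<n}" "j \<in> {..<n}"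
      then have "G $$ (i,j) = (\<Sum>l<p. Z $$ (i,l) * Z $$ (j,l))" unfolding G_def using gram_entry[OF Z] by simp
      then show "v $ i * G $$ (i,j) * v $ j = (\<Sum>l<p. (v $ i * Z $$ (i,l)) * (v $ j * Z $$ (j,l)))"
        by (simp add: sum_distrib_left sum_distrib_right mult_ac)
    qed
    also have "\<dots> = (\<Sum>l<p. (\<Sum>i<n. v $ i * Z $$ (i,l)) * (\<Sum>j<n. v $ j * Z $$ (j,l)))"
    proof -
      have "(\<Sum>i<n. \<Sum>j<n. \<Sum>l<p. (v $ i * Z $$ (i,l)) * (v $ j * Z $$ (j,l)))
          = (\<Sum>i<n. \<Sum>l<p. \<Sum>j<n. (v $ i * Z $$ (i,l)) * (v $ j * Z $$ (j,l)))"
        by (rule sum.cong[OF refl], rule sum.swap)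
      also have "\<dots> = (\<Sum>l<p. \<Sum>i<n. \<Sum>j<n. (v $ i * Z $$ (i,l)) * (v $ j * Z $$ (j,l)))"
        by (rule sum.swap)
      finally show ?thesis by (simp add: sum_product)
    qed
    also have "\<dots> \<ge> 0" by (intro sum_nonneg) simp
    finally show "0 \<le> v \<bullet> (G *\<^sub>v v)" .
  qed
  ultimately show ?thesis unfolding orthocut_feasible_def G_def n_def using G sm
    unfolding G_def n_def by simp
qed

lemma bm_obj_gram:
  assumes C: "C \<in> carrier_mat n n" and Z: "Z \<in> carrier_mat n p"
  shows "bm_obj C Z = frob C (Z * transpose_mat Z)"
proof -
  have CZ: "C * Z \<in> carrier_mat n p" using C Z by simp
  have "bm_obj C Z = (\<Sum>i<n. \<Sum>l<p. (C * Z) $$ (i,l) * Z $$ (i,l))"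
    unfolding bm_obj_def by (rule frob_entries[OF CZ])
  also have "\<dots> = (\<Sum>i<n. \<Sum>l<p. \<Sum>j<n. C $$ (i,j) * (Z $$ (j,l) * Z $$ (i,l)))"
  proof (intro sum.cong refl)
    fix i l assume "i \<in> {..<n}" "l \<in> {..<p}"
    then have "(C * Z) $$ (i,l) = (\<Sum>j<n. C $$ (i,j) * Z $$ (j,l))" using mult_entry[OF C Z] by simp
    then show "(C * Z) $$ (i,l) * Z $$ (i,l) = (\<Sum>j<n. C $$ (i,j) * (Z $$ (j,l) * Z $$ (i,l)))"
      by (simp add: sum_distrib_left mult_ac)
  qed
  also have "\<dots> = (\<Sum>i<n. \<Sum>j<n. C $$ (i,j) * (\<Sum>l<p. Z $$ (i,l) * Z $$ (j,l)))"
  proof (rule sum.cong[OF refl])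
    fix i
    have "(\<Sum>l<p. \<Sum>j<n. C $$ (i,j) * (Z $$ (j,l) * Z $$ (i,l))) = (\<Sum>j<n. \<Sum>l<p. C $$ (i,j) * (Z $$ (j,l) * Z $$ (i,l)))"
      by (rule sum.swap)
    also have "\<dots> = (\<Sum>j<n. C $$ (i,j) * (\<Sum>l<p. Z $$ (i,l) * Z $$ (j,l)))"
      by (simp add: sum_distrib_left mult_ac)
    finally show "(\<Sum>l<p. \<Sum>j<n. C $$ (i,j) * (Z $$ (j,l) * Z $$ (i,l))) = (\<Sum>j<n. C $$ (i,j) * (\<Sum>l<p. Z $$ (i,l) * Z $$ (j,l)))" .
  qed
  also have "\<dots> = frob C (Z * transpose_mat Z)"
    unfolding frob_entries[OF C] using gram_entry[OF Z] by (intro sum.cong refl) simp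
  finally show ?thesis .
qed


lemma pos_mult_nonneg: "0 \<le> a * b \<Longrightarrow> 0 < a \<Longrightarrow> 0 \<le> (b::real)"
  by (simp add: zero_le_mult_iff)

theorem corollary10:
  fixes q d p :: nat and C Y :: "real mat"
  assumes "q > 0" and "d > 0"
    and "C \<in> carrier_mat (q*d) (q*d)" and "transpose_mat C = C"
    and "real p > (real d + 1) / (real d + 3) * real (q*d)"
    and "second_order_critical q d p C Y"
  shows "(\<forall>Z. bm_feasible q d p Z \<longrightarrow> bm_obj C Y \<le> bm_obj C Z)
       \<and> orthocut_feasible (q*d) d (Y * transpose_mat Y)
       \<and> (\<forall>X. orthocut_feasible (q*d) d X \<longrightarrow> frob C (Y * transpose_mat Y) \<le> frob C X)"
proof -
  note d = assms(2)
  note C = assms(3)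
  define n where "n = q*d"
  have feas: "bm_feasible q d p Y" and SY0: "S_mat d C Y * Y = 0\<^sub>m (q*d) p"
    and so: "\<And>Yd. tangent d Y Yd \<Longrightarrow> frob Yd (S_mat d C Y * Yd) \<ge> 0"
    using assms(6) unfolding second_order_critical_def by auto
  have Y: "Y \<in> carrier_mat n p" using feas unfolding bm_feasible_def n_def by simp
  define L where "L = Lam (q*d) p d C Y"
  define S where "S = S_mat d C Y"
  have Seq: "S = C - L" unfolding S_def L_def by (rule S_mat_eq[OF feas d C])
  have bds: "block_diag_sym (q*d) d L" using Lam_bds[OF feas d C] unfolding L_def by simp
  have L: "L \<in> carrier_mat n n" and Lt: "transpose_mat L = L"
    and Loff: "\<And>i j. i < n \<Longrightarrow> j < n \<Longrightarrow> i div d \<noteq> j div d \<Longrightarrow> L $$ (i,j) = 0"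
    using bds unfolding block_diag_sym_def same_block_def n_def by auto
  have Cn: "C \<in> carrier_mat n n" using C n_def by simp
  have S: "S \<in> carrier_mat n n" unfolding Seq using L by (metis minus_carrier_mat)
  have Sent: "S $$ (i,j) = C $$ (i,j) - L $$ (i,j)" if "i < n" "j < n" for i j
    unfolding Seq using that Cn L by simp
  have Csym: "C $$ (i,j) = C $$ (j,i)" if "i < n" "j < n" for i j
    by (rule sym_entry[OF Cn assms(4) that])
  have Lsym: "L $$ (i,j) = L $$ (j,i)" if "i < n" "j < n" for i j
    by (rule sym_entry[OF L Lt that])
  have Ssym: "S $$ (i,j) = S $$ (j,i)" if "i < n" "j < n" for i j
    using Sent Csym Lsym that by simp
  have SYe: "(\<Sum>j<n. S $$ (i,j) * Y $$ (j,k)) = 0" if "i < n" "k < p" for i k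
  proof -
    have "(S * Y) $$ (i,k) = (\<Sum>j<n. S $$ (i,j) * Y $$ (j,k))" by (rule mult_entry[OF S Y that])
    moreover have "(S * Y) $$ (i,k) = 0" using SY0 that unfolding S_def n_def by simp
    ultimately show ?thesis by simp
  qed
  have cnt: "(d+1)*n < (d+3)*p"
  proof -
    have "(real d + 1) / (real d + 3) * real n < real p" using assms(5) n_def by simp
    then have "(real d + 1) * real n < real p * (real d + 3)"
      by (simp add: divide_less_eq field_simps)
    then have "real ((d+1)*n) < real ((d+3)*p)" by (simp add: algebra_simps)
    then show ?thesis by (simp only: of_nat_less_iff)
  qed
  interpret brows "\<lambda>a l. Y $$ (a,l)" p n d
    by unfold_locales (use d bm_orth[OF feas d] n_def in auto)
  have Spsd: "0 \<le> (\<Sum>i<n. \<Sum>j<n. v i * S $$ (i,j) * v j)" for v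
  proof -
    obtain z Q where znz: "\<exists>l<p. z l \<noteq> 0" and eq: "\<And>i j. i < n \<Longrightarrow> j < n \<Longrightarrow> i div d = j div d \<Longrightarrow>
       v i * (\<Sum>l<p. Y $$ (j,l) * z l) + v j * (\<Sum>l<p. Y $$ (i,l) * z l)
     + (\<Sum>l<p. (\<Sum>k<p. Y $$ (i,k) * Q k l) * Y $$ (j,l)) + (\<Sum>l<p. Y $$ (i,l) * (\<Sum>k<p. Y $$ (j,k) * Q k l)) = 0"
      using key[OF cnt, of v] by blast
    define T where "T = (\<lambda>i l. \<Sum>k<p. Y $$ (i,k) * Q k l)"
    define Yd where "Yd = mat n p (\<lambda>(i,l). v i * z l + T i l)"
    have Yd: "Yd \<in> carrier_mat n p" unfolding Yd_def by simp
    have Ydent: "Yd $$ (i,l) = v i * z l + T i l" if "i < n" "l < p" for i l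
      unfolding Yd_def using that by simp
    have tan: "tangent d Y Yd" unfolding tangent_def Let_def
    proof (intro conjI allI impI)
      show "Yd \<in> carrier_mat (dim_row Y) (dim_col Y)" using Yd Y by simp
      fix i j assume ij: "i < dim_row Y" "j < dim_row Y" "same_block d i j \<and> i \<le> j"
      then have ij': "i < n" "j < n" "i div d = j div d" using Y unfolding same_block_def by auto
      have e1: "(Yd * transpose_mat Y) $$ (i,j) = (\<Sum>l<p. Yd $$ (i,l) * Y $$ (j,l))"
        using mult_entry[OF Yd, of "transpose_mat Y" n i j] Y ij' by simp
      have e2: "(Y * transpose_mat Yd) $$ (i,j) = (\<Sum>l<p. Y $$ (i,l) * Yd $$ (j,l))"
        using mult_entry[OF Y, of "transpose_mat Yd" n i j] Yd ij' by simp
      have "(Yd * transpose_mat Y + Y * transpose_mat Yd) $$ (i,j)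
          = (\<Sum>l<p. Yd $$ (i,l) * Y $$ (j,l)) + (\<Sum>l<p. Y $$ (i,l) * Yd $$ (j,l))"
        using Yd Y ij' e1 e2 by simp
      also have "\<dots> = (\<Sum>l<p. (v i * z l + T i l) * Y $$ (j,l)) + (\<Sum>l<p. Y $$ (i,l) * (v j * z l + T j l))"
        using Ydent ij' by simp
      also have "\<dots> = v i * (\<Sum>l<p. Y $$ (j,l) * z l) + v j * (\<Sum>l<p. Y $$ (i,l) * z l)
         + (\<Sum>l<p. T i l * Y $$ (j,l)) + (\<Sum>l<p. Y $$ (i,l) * T j l)"
        by (simp add: algebra_simps sum.distrib sum_distrib_left)
      also have "\<dots> = 0" using eq[OF ij'] unfolding T_def .
      finally show "(Yd * transpose_mat Y + Y * transpose_mat Yd) $$ (i,j) = 0" .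
    qed
    define Sv where "Sv = (\<lambda>i. \<Sum>j<n. S $$ (i,j) * v j)"
    have SYd: "(S * Yd) $$ (i,l) = Sv i * z l" if "i < n" "l < p" for i l
    proof -
      have "(S * Yd) $$ (i,l) = (\<Sum>j<n. S $$ (i,j) * (v j * z l + T j l))"
        using mult_entry[OF S Yd that] Ydent that by simp
      also have "\<dots> = Sv i * z l + (\<Sum>j<n. \<Sum>k<p. S $$ (i,j) * Y $$ (j,k) * Q k l)"
        unfolding Sv_def T_def by (simp add: algebra_simps sum.distrib sum_distrib_left sum_distrib_right)
      also have "(\<Sum>j<n. \<Sum>k<p. S $$ (i,j) * Y $$ (j,k) * Q k l) = (\<Sum>k<p. (\<Sum>j<n. S $$ (i,j) * Y $$ (j,k)) * Q k l)"
        by (subst sum.swap) (simp add: sum_distrib_right)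
      also have "\<dots> = 0" using SYe that by simp
      finally show ?thesis by simp
    qed
    have TSv: "(\<Sum>i<n. T i l * Sv i) = 0" if l: "l < p" for l
    proof -
      have "(\<Sum>i<n. T i l * Sv i) = (\<Sum>i<n. \<Sum>k<p. \<Sum>j<n. Y $$ (i,k) * Q k l * S $$ (i,j) * v j)"
        unfolding T_def Sv_def by (simp add: sum_distrib_left sum_distrib_right mult_ac)
      also have "\<dots> = (\<Sum>k<p. \<Sum>j<n. \<Sum>i<n. Y $$ (i,k) * Q k l * S $$ (i,j) * v j)"
      proof -
        have "(\<Sum>i<n. \<Sum>k<p. \<Sum>j<n. Y $$ (i,k) * Q k l * S $$ (i,j) * v j)
            = (\<Sum>k<p. \<Sum>i<n. \<Sum>j<n. Y $$ (i,k) * Q k l * S $$ (i,j) * v j)" by (rule sum.swap)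
        also have "\<dots> = (\<Sum>k<p. \<Sum>j<n. \<Sum>i<n. Y $$ (i,k) * Q k l * S $$ (i,j) * v j)"
          by (rule sum.cong[OF refl], rule sum.swap)
        finally show ?thesis .
      qed
      also have "\<dots> = (\<Sum>k<p. \<Sum>j<n. (\<Sum>i<n. S $$ (j,i) * Y $$ (i,k)) * (Q k l * v j))"
      proof (intro sum.cong refl)
        fix k j assume "k \<in> {..<p}" "j \<in> {..<n}"
        then show "(\<Sum>i<n. Y $$ (i,k) * Q k l * S $$ (i,j) * v j) = (\<Sum>i<n. S $$ (j,i) * Y $$ (i,k)) * (Q k l * v j)"
        proof -
          have "(\<Sum>i<n. S $$ (j,i) * Y $$ (i,k)) = (\<Sum>i<n. S $$ (i,j) * Y $$ (i,k))"
            using Ssym \<open>j \<in> {..<n}\<close> by (intro sum.cong refl) auto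
          then show ?thesis by (simp add: sum_distrib_left sum_distrib_right mult_ac)
        qed
      qed
      also have "\<dots> = 0" using SYe by simp
      finally show ?thesis .
    qed
    have "frob Yd (S * Yd) = (\<Sum>i<n. \<Sum>l<p. (v i * z l + T i l) * (Sv i * z l))"
      unfolding frob_entries[OF Yd]
    proof (intro sum.cong refl)
      fix i l assume "i \<in> {..<n}" "l \<in> {..<p}"
      then show "Yd $$ (i,l) * (S * Yd) $$ (i,l) = (v i * z l + T i l) * (Sv i * z l)"
        using Ydent[of i l] SYd[of i l] by simp
    qed
    also have "\<dots> = (\<Sum>l<p. z l * z l) * (\<Sum>i<n. v i * Sv i) + (\<Sum>l<p. z l * (\<Sum>i<n. T i l * Sv i))"
    proof -
      have "(\<Sum>i<n. \<Sum>l<p. (v i * z l + T i l) * (Sv i * z l))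
          = (\<Sum>i<n. \<Sum>l<p. (z l * z l) * (v i * Sv i) + z l * (T i l * Sv i))"
        by (intro sum.cong refl) (simp add: algebra_simps)
      also have "\<dots> = (\<Sum>l<p. \<Sum>i<n. (z l * z l) * (v i * Sv i) + z l * (T i l * Sv i))"
        by (rule sum.swap)
      also have "\<dots> = (\<Sum>l<p. z l * z l) * (\<Sum>i<n. v i * Sv i) + (\<Sum>l<p. z l * (\<Sum>i<n. T i l * Sv i))"
      proof -
        have A: "(\<Sum>l<p. \<Sum>i<n. z l * z l * (v i * Sv i)) = (\<Sum>l<p. z l * z l) * (\<Sum>i<n. v i * Sv i)"
          by (simp add: sum_product)
        have B: "(\<Sum>l<p. \<Sum>i<n. z l * (T i l * Sv i)) = (\<Sum>l<p. z l * (\<Sum>i<n. T i l * Sv i))"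
          by (simp add: sum_distrib_left)
        show ?thesis by (simp only: sum.distrib A B)
      qed
      finally show ?thesis .
    qed
    also have "\<dots> = (\<Sum>l<p. z l * z l) * (\<Sum>i<n. \<Sum>j<n. v i * S $$ (i,j) * v j)"
    proof -
      have z1: "(\<Sum>l<p. z l * (\<Sum>i<n. T i l * Sv i)) = 0" using TSv by simp
      have z2: "(\<Sum>i<n. v i * Sv i) = (\<Sum>i<n. \<Sum>j<n. v i * S $$ (i,j) * v j)"
        unfolding Sv_def by (simp add: sum_distrib_left mult.assoc)
      show ?thesis unfolding z1 z2 by simp
    qed
    finally have fr: "frob Yd (S * Yd) = (\<Sum>l<p. z l * z l) * (\<Sum>i<n. \<Sum>j<n. v i * S $$ (i,j) * v j)" .
    have h0: "0 \<le> frob Yd (S * Yd)" using so[OF tan] unfolding S_def .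
    have h1: "0 \<le> (\<Sum>l<p. z l * z l) * (\<Sum>i<n. \<Sum>j<n. v i * S $$ (i,j) * v j)"
      using h0 unfolding fr .
    have pos: "0 < (\<Sum>l<p. z l * z l)"
    proof -
      obtain l0 where l0: "l0 < p" "z l0 \<noteq> 0" using znz by blast
      have "0 < z l0 * z l0" using l0 by (auto simp: zero_less_mult_iff linorder_neq_iff)
      also have "\<dots> \<le> (\<Sum>l<p. z l * z l)"
        using l0 by (intro member_le_sum) auto
      finally show ?thesis .
    qed
    show ?thesis by (rule pos_mult_nonneg[OF h1 pos])
  qed
  have opt: "frob C (Y * transpose_mat Y) \<le> frob C X" if X: "orthocut_feasible (q*d) d X" for X
  proof -
    have Xc: "X \<in> carrier_mat n n" and Xs: "sym_mat X" and Xb: "sbd_eq_id d X" and Xp: "psd X"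
      using X unfolding orthocut_feasible_def n_def by blast+
    have Xsym: "X $$ (i,j) = X $$ (j,i)" if "i < n" "j < n" for i j
    proof -
      have Xt: "transpose_mat X = X" using Xs unfolding sym_mat_def by simp
      show ?thesis by (rule sym_entry[OF Xc Xt that])
    qed
    have Xblk: "X $$ (i,j) = (if i = j then 1 else 0)" if "i < n" "j < n" "i div d = j div d" for i j
    proof -
      have "dim_row X = n" using Xc by simp
      then show ?thesis using Xb[unfolded sbd_eq_id_def same_block_def, rule_format, of i j] that by simp
    qed
    define G where "G = Y * transpose_mat Y"
    have G: "G \<in> carrier_mat n n" unfolding G_def using Y by simp
    have Gent: "G $$ (i,j) = (\<Sum>l<p. Y $$ (i,l) * Y $$ (j,l))" if "i < n" "j < n" for i j
      unfolding G_def by (rule gram_entry[OF Y that])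
    have Gblk: "G $$ (i,j) = (if i = j then 1 else 0)" if "i < n" "j < n" "i div d = j div d" for i j
      using Gent[OF that(1,2)] bm_orth[OF feas d] that n_def by simp
    have Ltr: "(\<Sum>i<n. \<Sum>j<n. L $$ (i,j) * W $$ (i,j)) = (\<Sum>i<n. L $$ (i,i))"
      if Wb: "\<And>i j. i < n \<Longrightarrow> j < n \<Longrightarrow> i div d = j div d \<Longrightarrow> W $$ (i,j) = (if i = j then 1 else 0)" for W :: "real mat"
    proof -
      have "(\<Sum>i<n. \<Sum>j<n. L $$ (i,j) * W $$ (i,j)) = (\<Sum>i<n. \<Sum>j<n. if j = i then L $$ (i,j) else 0)"
      proof (intro sum.cong refl)
        fix i j assume "i \<in> {..<n}" "j \<in> {..<n}"
        then show "L $$ (i,j) * W $$ (i,j) = (if j = i then L $$ (i,j) else 0)"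
        proof (cases "i div d = j div d")
          case True
          then show ?thesis using Wb[of i j] \<open>i \<in> {..<n}\<close> \<open>j \<in> {..<n}\<close> by simp
        next
          case False
          then have "L $$ (i,j) = 0" using Loff \<open>i \<in> {..<n}\<close> \<open>j \<in> {..<n}\<close> by simp
          moreover have "i \<noteq> j" using False by auto
          ultimately show ?thesis by simp
        qed
      qed
      then show ?thesis by simp
    qed
    have SG: "(\<Sum>i<n. \<Sum>j<n. S $$ (i,j) * G $$ (i,j)) = 0"
    proof -
      have "(\<Sum>i<n. \<Sum>j<n. S $$ (i,j) * G $$ (i,j)) = (\<Sum>i<n. \<Sum>j<n. \<Sum>l<p. Y $$ (i,l) * (S $$ (i,j) * Y $$ (j,l)))"
        using Gent by (simp add: sum_distrib_left mult_ac)
      also have "\<dots> = (\<Sum>i<n. \<Sum>l<p. Y $$ (i,l) * (\<Sum>j<n. S $$ (i,j) * Y $$ (j,l)))"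
        by (rule sum.cong[OF refl], subst sum.swap) (simp add: sum_distrib_left)
      also have "\<dots> = 0" using SYe by simp
      finally show ?thesis .
    qed
    have SX: "0 \<le> (\<Sum>i<n. \<Sum>j<n. S $$ (i,j) * X $$ (i,j))"
    proof (rule fejer[of n "\<lambda>i j. X $$ (i,j)" "\<lambda>i j. S $$ (i,j)"])
      show "\<And>i j. i < n \<Longrightarrow> j < n \<Longrightarrow> X $$ (i,j) = X $$ (j,i)" by (rule Xsym)
      show "\<And>v. 0 \<le> (\<Sum>i<n. \<Sum>j<n. v i * S $$ (i,j) * v j)" by (rule Spsd)
      show "\<And>v. 0 \<le> (\<Sum>i<n. \<Sum>j<n. v i * X $$ (i,j) * v j)" by (rule psd_fn[OF Xp Xc])
    qed
    have decomp: "frob C W = (\<Sum>i<n. \<Sum>j<n. S $$ (i,j) * W $$ (i,j)) + (\<Sum>i<n. \<Sum>j<n. L $$ (i,j) * W $$ (i,j))" for W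
    proof -
      have "frob C W = (\<Sum>i<n. \<Sum>j<n. S $$ (i,j) * W $$ (i,j) + L $$ (i,j) * W $$ (i,j))"
        unfolding frob_entries[OF Cn]
      proof (intro sum.cong refl)
        fix i j assume "i \<in> {..<n}" "j \<in> {..<n}"
        then show "C $$ (i,j) * W $$ (i,j) = S $$ (i,j) * W $$ (i,j) + L $$ (i,j) * W $$ (i,j)"
          using Sent[of i j] by (simp add: ring_distribs)
      qed
      then show ?thesis by (simp only: sum.distrib)
    qed
    have fX: "frob C X = (\<Sum>i<n. \<Sum>j<n. S $$ (i,j) * X $$ (i,j)) + (\<Sum>i<n. L $$ (i,i))"
      using decomp[of X] Ltr[of X, OF Xblk] by (simp only:)
    have fG: "frob C G = 0 + (\<Sum>i<n. L $$ (i,i))"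
      using decomp[of G] Ltr[of G, OF Gblk] SG by (simp only: add_0)
    show ?thesis unfolding G_def[symmetric] fX fG using SX by simp
  qed
  have bm: "bm_obj C Y \<le> bm_obj C Z" if Z: "bm_feasible q d p Z" for Z
  proof -
    have Zc: "Z \<in> carrier_mat n p" using Z unfolding bm_feasible_def n_def by simp
    show ?thesis unfolding bm_obj_gram[OF Cn Y] bm_obj_gram[OF Cn Zc]
      by (rule opt[OF gram_feasible[OF Z d]])
  qed
  show ?thesis using bm gram_feasible[OF feas d] opt by blast
qed

end
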